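(* Assume $Q$ has no oriented cycle. For each $i\in Q_0$ the real $(1,1)$-form $\mathbf i\,\partial\bar\partial\log\det(\rho_i\rho_i^* )$ on $R^s_{\vec n,\vec d}$ is $\mathrm{GL}_{\vec d}$-invariant and positive semidefinite, and the sum $\Omega=\mathbf i\sum_{i\in Q_0}\partial\bar\partial\log\det(\rho_i\rho_i^* )$ descends to a Kähler form on $\mathcal M_{\vec n,\vec d}$ (i.e. it is the pullback of a closed, positive definite real $(1,1)$-form on $\mathcal M_{\vec n,\vec d}$). Equivalently, the Ricci (first Chern) curvature form of the Hermitian metric on $\bigotimes_{i\in Q_0}\mathcal V_i$ (through $\bigotimes_i\det\mathcal V_i$) induced by the metrics $H_i=(\rho_i\rho_i^* )^{-1}$ defines a Kähler metric on $\mathcal M_{\vec n,\vec d}$.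
   Context: Let $Q$ be a finite quiver with vertex set $Q_0$, arrow set $Q_1$, and head/tail maps $h,t:Q_1\to Q_0$. Fix $\vec d,\vec n\in\mathbb Z_{\ge0}^{Q_0}$. Let $R_{\vec n,\vec d}=\bigoplus_{a\in Q_1}\mathrm{Hom}(\mathbb C^{d_{t(a)}},\mathbb C^{d_{h(a)}})\oplus\bigoplus_{i\in Q_0}\mathrm{Hom}(\mathbb C^{n_i},\mathbb C^{d_i})$, points $(V,e)=((V_a)_a,(e^{(i)})_i)$, with the action of $\mathrm{GL}_{\vec d}=\prod_i\mathrm{GL}(d_i,\mathbb C)$ given by $g\cdot(V,e)=((g_{h(a)}V_ag_{t(a)}^{-1})_a,(g_ie^{(i)})_i)$. $(V,e)$ is stable if there is no collection of subspaces $U_i\subseteq\mathbb C^{d_i}$, not all equal to $\mathbb C^{d_i}$, with $V_a(U_{t(a)})\subseteq U_{h(a)}$ and $\mathrm{Im}\,e^{(i)}\subseteq U_i$; $R^s_{\vec n,\vec d}$ is the stable locus, $\mathcal M_{\vec n,\vec d}=R^s_{\vec n,\vec d}/\mathrm{GL}_{\vec d}$ the (smooth) framed quiver moduli and $\mathcal V_i=(R^s_{\vec n,\vec d}\times\mathbb C^{d_i})/\mathrm{GL}_{\vec d}$ the universal bundles. For a path $\gamma=a_k\cdots a_1$, $V_\gamma=V_{a_k}\cdots V_{a_1}$, $h(\gamma)=h(a_k)$, $t(\gamma)=t(a_1)$ (trivial path at $i$: $V_\gamma=I_{d_i}$). $\rho_i$ is the block row matrix with blocks $V_\gamma e^{(t(\gamma))}$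 over all paths with $h(\gamma)=i$; its entries are polynomial (holomorphic) functions on $R_{\vec n,\vec d}$, and $\rho_i\rho_i^*$ is invertible on $R^s_{\vec n,\vec d}$; $H_i=(\rho_i\rho_i^* )^{-1}$ descends to a Hermitian metric on $\mathcal V_i$. *)

theory Defs
  imports "HOL-Analysis.Analysis" "Jordan_Normal_Form.Determinant"
begin

text \<open>A framed quiver representation point (V, e): V a is a d(h a) x d(t a) matrix,
 e i is a d i x n i matrix. Points of R are pairs of such families.\<close>

type_synonym ('v,'e) qpoint = "('e \<Rightarrow> complex mat) \<times> ('v \<Rightarrow> complex mat)"

definition wf_point :: "'v set \<Rightarrow> 'e set \<Rightarrow> ('e \<Rightarrow> 'v) \<Rightarrow> ('e \<Rightarrow> 'v)
   \<Rightarrow> ('v \<Rightarrow> nat) \<Rightarrow> ('v \<Rightarrow> nat) \<Rightarrow> ('v,'e) qpoint \<Rightarrow> bool" where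
  "wf_point Q0 Q1 h t n d x \<longleftrightarrow>
     (\<forall>a\<in>Q1. fst x a \<in> carrier_mat (d (h a)) (d (t a))) \<and>
     (\<forall>i\<in>Q0. snd x i \<in> carrier_mat (d i) (n i))"

text \<open>Paths: a start vertex j and a list of arrows [a1,...,ak] (a1 first).\<close>
fun is_path :: "('e \<Rightarrow> 'v) \<Rightarrow> ('e \<Rightarrow> 'v) \<Rightarrow> 'v \<Rightarrow> 'e list \<Rightarrow> bool" where
  "is_path h t j [] = True"
| "is_path h t j (a # as) = (t a = j \<and> is_path h t (h a) as)"

fun path_end :: "('e \<Rightarrow> 'v) \<Rightarrow> 'v \<Rightarrow> 'e list \<Rightarrow> 'v" where
  "path_end h j [] = j"
| "path_end h j (a # as) = path_end h (h a) as"

text \<open>V_gamma = V_ak * ... * V_a1 (identity for the trivial path at j).\<close>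
fun path_mat :: "('e \<Rightarrow> 'v) \<Rightarrow> ('v \<Rightarrow> nat) \<Rightarrow> ('e \<Rightarrow> complex mat) \<Rightarrow> 'v \<Rightarrow> 'e list \<Rightarrow> complex mat" where
  "path_mat h d V j [] = 1\<^sub>m (d j)"
| "path_mat h d V j (a # as) = path_mat h d V (h a) as * V a"

definition no_oriented_cycle :: "'v set \<Rightarrow> 'e set \<Rightarrow> ('e \<Rightarrow> 'v) \<Rightarrow> ('e \<Rightarrow> 'v) \<Rightarrow> bool" where
  "no_oriented_cycle Q0 Q1 h t \<longleftrightarrow>
     \<not> (\<exists>j as. j \<in> Q0 \<and> as \<noteq> [] \<and> set as \<subseteq> Q1 \<and> is_path h t j as \<and> path_end h j as = j)"

definition paths_to :: "'v set \<Rightarrow> 'e set \<Rightarrow> ('e \<Rightarrow> 'v) \<Rightarrow> ('e \<Rightarrow> 'v) \<Rightarrow> 'v \<Rightarrow> ('v \<times> 'e list) set" where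
  "paths_to Q0 Q1 h t i = {(j, as). j \<in> Q0 \<and> set as \<subseteq> Q1 \<and> is_path h t j as \<and> path_end h j as = i}"

text \<open>rho_i rho_i^* = sum over paths gamma with head i of B_gamma B_gamma^*, B_gamma = V_gamma e^(t gamma).\<close>
definition rhorho :: "'v set \<Rightarrow> 'e set \<Rightarrow> ('e \<Rightarrow> 'v) \<Rightarrow> ('e \<Rightarrow> 'v) \<Rightarrow> ('v \<Rightarrow> nat) \<Rightarrow> ('v \<Rightarrow> nat)
    \<Rightarrow> 'v \<Rightarrow> ('v,'e) qpoint \<Rightarrow> complex mat" where
  "rhorho Q0 Q1 h t n d i x = mat (d i) (d i) (\<lambda>(r, c).
     \<Sum>(j, as) \<in> paths_to Q0 Q1 h t i.
        let B = path_mat h d (fst x) j as * snd x j in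
        \<Sum>k < n j. B $$ (r, k) * cnj (B $$ (c, k)))"

text \<open>log det (rho_i rho_i^*)  (the determinant is real and positive on the stable locus).\<close>
definition logdet :: "'v set \<Rightarrow> 'e set \<Rightarrow> ('e \<Rightarrow> 'v) \<Rightarrow> ('e \<Rightarrow> 'v) \<Rightarrow> ('v \<Rightarrow> nat) \<Rightarrow> ('v \<Rightarrow> nat)
    \<Rightarrow> 'v \<Rightarrow> ('v,'e) qpoint \<Rightarrow> real" where
  "logdet Q0 Q1 h t n d i x = ln (Re (det (rhorho Q0 Q1 h t n d i x)))"

definition subspace_vec :: "nat \<Rightarrow> complex vec set \<Rightarrow> bool" where
  "subspace_vec m U \<longleftrightarrow> U \<subseteq> carrier_vec m \<and> 0\<^sub>v m \<in> U \<and>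
     (\<forall>u\<in>U. \<forall>w\<in>U. u + w \<in> U) \<and> (\<forall>c. \<forall>u\<in>U. c \<cdot>\<^sub>v u \<in> U)"

definition stable :: "'v set \<Rightarrow> 'e set \<Rightarrow> ('e \<Rightarrow> 'v) \<Rightarrow> ('e \<Rightarrow> 'v) \<Rightarrow> ('v \<Rightarrow> nat) \<Rightarrow> ('v \<Rightarrow> nat)
    \<Rightarrow> ('v,'e) qpoint \<Rightarrow> bool" where
  "stable Q0 Q1 h t n d x \<longleftrightarrow> wf_point Q0 Q1 h t n d x \<and>
     \<not> (\<exists>U :: 'v \<Rightarrow> complex vec set.
          (\<forall>i\<in>Q0. subspace_vec (d i) (U i)) \<and>
          (\<exists>i\<in>Q0. U i \<noteq> carrier_vec (d i)) \<and>
          (\<forall>a\<in>Q1. \<forall>u\<in>U (t a). fst x a *\<^sub>v u \<in> U (h a)) \<and>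
          (\<forall>i\<in>Q0. \<forall>w\<in>carrier_vec (n i). snd x i *\<^sub>v w \<in> U i))"

text \<open>GL_d elements, given together with their inverses k (g i * k i = k i * g i = 1).\<close>
definition is_GL :: "'v set \<Rightarrow> ('v \<Rightarrow> nat) \<Rightarrow> ('v \<Rightarrow> complex mat) \<Rightarrow> ('v \<Rightarrow> complex mat) \<Rightarrow> bool" where
  "is_GL Q0 d g k \<longleftrightarrow> (\<forall>i\<in>Q0. g i \<in> carrier_mat (d i) (d i) \<and> k i \<in> carrier_mat (d i) (d i) \<and>
      g i * k i = 1\<^sub>m (d i) \<and> k i * g i = 1\<^sub>m (d i))"

definition gl_act :: "('e \<Rightarrow> 'v) \<Rightarrow> ('e \<Rightarrow> 'v) \<Rightarrow> ('v \<Rightarrow> complex mat) \<Rightarrow> ('v \<Rightarrow> complex mat)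
    \<Rightarrow> ('v,'e) qpoint \<Rightarrow> ('v,'e) qpoint" where
  "gl_act h t g k x = ((\<lambda>a. g (h a) * fst x a * k (t a)), (\<lambda>i. g i * snd x i))"

definition padd :: "('v,'e) qpoint \<Rightarrow> complex \<Rightarrow> ('v,'e) qpoint \<Rightarrow> ('v,'e) qpoint" where
  "padd x c v = ((\<lambda>a. fst x a + c \<cdot>\<^sub>m fst v a), (\<lambda>i. snd x i + c \<cdot>\<^sub>m snd v i))"

text \<open>Levi form (value of the real (1,1)-form i ddbar F on the Hermitian square of the tangent
 vector v at x, up to the positive constant normalisation):
 d^2/dz dzbar of F(x + z v) at z = 0, i.e. one quarter of the Laplacian in z = s + i u.\<close>
definition levi :: "(('v,'e) qpoint \<Rightarrow> real) \<Rightarrow> ('v,'e) qpoint \<Rightarrow> ('v,'e) qpoint \<Rightarrow> real" where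
  "levi F x v = (deriv (deriv (\<lambda>s::real. F (padd x (complex_of_real s) v))) 0
               + deriv (deriv (\<lambda>s::real. F (padd x (\<i> * complex_of_real s) v))) 0) / 4"

text \<open>Tangent space of the GL_d-orbit at x: infinitesimal action of xi in gl_d.\<close>
definition in_orbit_tangent :: "'v set \<Rightarrow> 'e set \<Rightarrow> ('e \<Rightarrow> 'v) \<Rightarrow> ('e \<Rightarrow> 'v) \<Rightarrow> ('v \<Rightarrow> nat)
    \<Rightarrow> ('v,'e) qpoint \<Rightarrow> ('v,'e) qpoint \<Rightarrow> bool" where
  "in_orbit_tangent Q0 Q1 h t d x v \<longleftrightarrow> (\<exists>xi :: 'v \<Rightarrow> complex mat.
       (\<forall>i\<in>Q0. xi i \<in> carrier_mat (d i) (d i)) \<and>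
       (\<forall>a\<in>Q1. fst v a = xi (h a) * fst x a - fst x a * xi (t a)) \<and>
       (\<forall>i\<in>Q0. snd v i = xi i * snd x i))"

end

theory Submission
  imports Defs "HOL-Complex_Analysis.Complex_Analysis"
begin



definition D2 :: "(real \<Rightarrow> real) \<Rightarrow> real \<Rightarrow> bool" where
 "D2 f w \<longleftrightarrow> (\<exists>g. eventually (\<lambda>s. (f has_real_derivative g s) (at s)) (nhds 0) \<and> (g has_real_derivative w) (at 0))"

lemma D2_deriv: assumes "D2 f w" shows "deriv (deriv f) 0 = w"
proof -
  obtain g where ev: "eventually (\<lambda>s. (f has_real_derivative g s) (at s)) (nhds 0)"
    and gw: "(g has_real_derivative w) (at 0)"
    using assms unfolding D2_def by blast
  have "eventually (\<lambda>s. deriv f s = g s) (nhds 0)"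
    using ev by (rule eventually_mono) (rule DERIV_imp_deriv)
  then have "(deriv f has_real_derivative w) (at 0)"
    using DERIV_cong_ev[of 0 0 "deriv f" g w w] gw by simp
  then show ?thesis by (rule DERIV_imp_deriv)
qed

lemma D2_sum: assumes "finite I" "\<forall>i\<in>I. D2 (f i) (w i)"
  shows "D2 (\<lambda>s. \<Sum>i\<in>I. f i s) (\<Sum>i\<in>I. w i)"
proof -
  obtain g where g: "\<forall>i\<in>I. eventually (\<lambda>s. (f i has_real_derivative g i s) (at s)) (nhds 0)
      \<and> (g i has_real_derivative w i) (at 0)"
    using bchoice[OF assms(2)[unfolded D2_def]] by blast
  have "eventually (\<lambda>s. \<forall>i\<in>I. (f i has_real_derivative g i s) (at s)) (nhds 0)"
    using g assms(1) by (simp add: eventually_ball_finite)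
  hence "eventually (\<lambda>s. ((\<lambda>s. \<Sum>i\<in>I. f i s) has_real_derivative (\<Sum>i\<in>I. g i s)) (at s)) (nhds 0)"
    by (rule eventually_mono) (auto intro: DERIV_sum)
  moreover have "((\<lambda>s. \<Sum>i\<in>I. g i s) has_real_derivative (\<Sum>i\<in>I. w i)) (at 0)"
    using g by (auto intro: DERIV_sum)
  ultimately show ?thesis unfolding D2_def by (intro exI[of _ "\<lambda>s. \<Sum>i\<in>I. g i s"]) auto
qed

lemma re_deriv:
  assumes "(\<Psi> has_field_derivative d) (at (of_real s))"
  shows "((\<lambda>s. Re (\<Psi> (of_real s))) has_real_derivative Re d) (at s)"
proof -
  have "((\<lambda>x. \<Psi> (of_real x)) has_vector_derivative d) (at s)"
    by (rule has_vector_derivative_real_field[OF assms])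
  then show ?thesis unfolding has_vector_derivative_complex_iff by simp
qed

lemma D2_ln:
  assumes d1: "\<And>z. (\<Phi> has_field_derivative \<Phi>1 z) (at z)"
    and d2: "\<And>z. (\<Phi>1 has_field_derivative \<Phi>2 z) (at z)"
    and pos: "Re (\<Phi> 0) > 0"
  shows "D2 (\<lambda>s. ln (Re (\<Phi> (of_real s))))
     ((Re (\<Phi>2 0) * Re (\<Phi> 0) - Re (\<Phi>1 0) * Re (\<Phi>1 0)) / (Re (\<Phi> 0) * Re (\<Phi> 0)))"
proof -
  define p where "p s = Re (\<Phi> (of_real s))" for s :: real
  define q where "q s = Re (\<Phi>1 (of_real s))" for s :: real
  have dp: "(p has_real_derivative q s) (at s)" for s
    unfolding p_def q_def by (rule re_deriv[OF d1])
  have dq: "(q has_real_derivative Re (\<Phi>2 (of_real s))) (at s)" for s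
    unfolding q_def by (rule re_deriv[OF d2])
  have "isCont p 0" using dp by (rule DERIV_isCont)
  hence "(p \<longlongrightarrow> p 0) (nhds 0)" by (simp add: isCont_def tendsto_at_iff_tendsto_nhds)
  moreover have "p 0 > 0" using pos by (simp add: p_def)
  ultimately have ev: "eventually (\<lambda>s. p s > 0) (nhds 0)" by (rule order_tendstoD(1))
  have "eventually (\<lambda>s. ((\<lambda>s. ln (p s)) has_real_derivative q s / p s) (at s)) (nhds 0)"
    using ev
  proof (rule eventually_mono)
    fix s assume "p s > 0"
    from DERIV_chain2[OF DERIV_ln_divide[OF this] dp]
    show "((\<lambda>s. ln (p s)) has_real_derivative q s / p s) (at s)" by simp
  qed
  moreover have "((\<lambda>s. q s / p s) has_real_derivative
      (Re (\<Phi>2 0) * p 0 - q 0 * q 0) / (p 0 * p 0)) (at 0)"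
    using DERIV_divide[OF dq[of 0] dp[of 0]] \<open>p 0 > 0\<close> by simp
  ultimately show ?thesis unfolding D2_def p_def q_def by auto
qed

definition Gs :: "(complex \<Rightarrow> complex) \<Rightarrow> complex \<Rightarrow> complex" where
  "Gs G z = cnj (G (cnj z))"

lemma Gc_deriv: assumes "G holomorphic_on UNIV"
  shows "((\<lambda>z. G (c*z)) has_field_derivative deriv G (c*z) * c) (at z)"
proof -
  have "(G has_field_derivative deriv G (c*z)) (at (c*z))"
    using holomorphic_derivI[OF assms] by auto
  moreover have "((\<lambda>z. c*z) has_field_derivative c) (at z)"
    by (auto intro!: derivative_eq_intros)
  ultimately show ?thesis by (rule DERIV_chain2)
qed

lemma Gsc_deriv: assumes "G holomorphic_on UNIV"
  shows "((\<lambda>z. Gs G (c*z)) has_field_derivative Gs (deriv G) (c*z) * c) (at z)"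
proof -
  have "(G has_field_derivative deriv G (cnj (c*z))) (at (cnj (c*z)))"
    using holomorphic_derivI[OF assms] by auto
  from has_field_derivative_cnj_cnj[OF this]
  have "(Gs G has_field_derivative Gs (deriv G) (c*z)) (at (c*z))"
    unfolding Gs_def[abs_def] by (simp add: o_def)
  moreover have "((\<lambda>z. c*z) has_field_derivative c) (at z)"
    by (auto intro!: derivative_eq_intros)
  ultimately show ?thesis by (rule DERIV_chain2)
qed



lemma dG_eq: assumes "G holomorphic_on UNIV" "(g has_field_derivative g') (at z)"
   "X = deriv G (g z) * g'"
  shows "((\<lambda>z. G (g z)) has_field_derivative X) (at z)"
  using DERIV_chain2[OF _ assms(2), of G] holomorphic_derivI[OF assms(1)] assms(3) by auto

lemma dGs_eq: assumes "G holomorphic_on UNIV" "(g has_field_derivative g') (at z)"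
   "X = Gs (deriv G) (g z) * g'"
  shows "((\<lambda>z. Gs G (g z)) has_field_derivative X) (at z)"
proof -
  have "(G has_field_derivative deriv G (cnj (g z))) (at (cnj (g z)))"
    using holomorphic_derivI[OF assms(1)] by auto
  from has_field_derivative_cnj_cnj[OF this]
  have "(Gs G has_field_derivative Gs (deriv G) (g z)) (at (g z))"
    unfolding Gs_def[abs_def] by (simp add: o_def)
  from DERIV_chain2[OF this assms(2)] assms(3) show ?thesis by simp
qed

lemma cmod_sq_eq: "z * cnj z = (complex_of_real (cmod z))\<^sup>2"
  by (metis complex_norm_square of_real_power)

lemma dGc: assumes "G holomorphic_on UNIV" "X = deriv G (w*z) * w"
  shows "((\<lambda>z. G (w*z)) has_field_derivative X) (at z)"
  by (rule dG_eq[OF assms(1) DERIV_cmult[OF DERIV_ident]]) (simp add: assms(2))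

lemma dGsc: assumes "G holomorphic_on UNIV" "X = Gs (deriv G) (w*z) * w"
  shows "((\<lambda>z. Gs G (w*z)) has_field_derivative X) (at z)"
  by (rule dGs_eq[OF assms(1) DERIV_cmult[OF DERIV_ident]]) (simp add: assms(2))

lemma Phi_c:
  fixes G :: "'k \<Rightarrow> complex \<Rightarrow> complex" and C :: real and c :: complex
  assumes K: "finite K" and hol: "\<forall>k\<in>K. G k holomorphic_on UNIV"
    and C: "C > 0" and S: "(\<Sum>k\<in>K. (cmod (G k 0))\<^sup>2) > 0"
  defines "S0 \<equiv> (\<Sum>k\<in>K. (cmod (G k 0))\<^sup>2)"
    and "T \<equiv> (\<Sum>k\<in>K. deriv (deriv (G k)) 0 * cnj (G k 0))"
    and "A \<equiv> (\<Sum>k\<in>K. deriv (G k) 0 * cnj (G k 0))"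
    and "N \<equiv> (\<Sum>k\<in>K. deriv (G k) 0 * cnj (deriv (G k) 0))"
  shows "D2 (\<lambda>s. ln (C * (\<Sum>k\<in>K. (cmod (G k (c * of_real s)))\<^sup>2)))
     ((Re (c*c*T + 2*c*cnj c*N + cnj c * cnj c * cnj T) * S0 - (Re (c*A + cnj c * cnj A))\<^sup>2)/(S0*S0))"
proof -
  define G1 where "G1 k = deriv (G k)" for k
  define G2 where "G2 k = deriv (G1 k)" for k
  have hol1: "\<forall>k\<in>K. G1 k holomorphic_on UNIV" using hol unfolding G1_def by (auto intro: holomorphic_deriv)
  have hol2: "\<forall>k\<in>K. G2 k holomorphic_on UNIV" using hol1 unfolding G2_def by (auto intro: holomorphic_deriv)
  define c' where "c' = cnj c"
  define \<Phi> where "\<Phi> z = C * (\<Sum>k\<in>K. G k (c*z) * Gs (G k) (c'*z))" for z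
  define \<Phi>1 where "\<Phi>1 z = C * (\<Sum>k\<in>K. G k (c*z) * (Gs (G1 k) (c'*z) * c') + G1 k (c*z) * c * Gs (G k) (c'*z))" for z
  define \<Phi>2 where "\<Phi>2 z = C * (\<Sum>k\<in>K. G k (c*z) * (Gs (G2 k) (c'*z) * c' * c') + G1 k (c*z) * c * (Gs (G1 k) (c'*z) * c')
      + (G1 k (c*z) * c * (Gs (G1 k) (c'*z) * c') + G2 k (c*z) * c * c * Gs (G k) (c'*z)))" for z
  have d1: "(\<Phi> has_field_derivative \<Phi>1 z) (at z)" for z
    unfolding \<Phi>_def \<Phi>1_def
    using hol hol1 unfolding G1_def
    apply (intro DERIV_cmult DERIV_sum DERIV_mult' DERIV_add)
     apply (rule dG_eq, use hol in blast, rule DERIV_cmult[OF DERIV_ident], simp)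
     apply (rule dGs_eq, use hol in blast, rule DERIV_cmult[OF DERIV_ident], simp)
    done
  have d2: "(\<Phi>1 has_field_derivative \<Phi>2 z) (at z)" for z
    unfolding \<Phi>1_def \<Phi>2_def
    apply (intro DERIV_cmult DERIV_sum DERIV_cmult_right DERIV_mult' DERIV_add)
    using hol hol1 by (auto intro!: dGc dGsc simp: G1_def G2_def)
  have Phir: "\<Phi> (of_real s) = of_real (C * (\<Sum>k\<in>K. (cmod (G k (c * of_real s)))\<^sup>2))" for s
    unfolding \<Phi>_def c'_def Gs_def by (simp add: cmod_sq_eq)
  have "Re (\<Phi> 0) > 0" using Phir[of 0] C S by simp
  note D = D2_ln[OF d1 d2 this]
  have e0: "\<Phi> 0 = of_real (C * S0)" using Phir[of 0] unfolding S0_def by simp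
  have e1: "\<Phi>1 0 = of_real C * (c*A + cnj c * cnj A)"
    unfolding \<Phi>1_def A_def Gs_def G1_def c'_def
    by (simp add: sum_distrib_left sum.distrib algebra_simps)
  have e2: "\<Phi>2 0 = of_real C * (c*c*T + 2*c*cnj c*N + cnj c * cnj c * cnj T)"
    unfolding \<Phi>2_def T_def N_def Gs_def G1_def G2_def c'_def
    by (simp add: sum_distrib_left sum.distrib algebra_simps)
  have fe: "(\<lambda>s. ln (Re (\<Phi> (of_real s)))) = (\<lambda>s. ln (C * (\<Sum>k\<in>K. (cmod (G k (c * of_real s)))\<^sup>2)))"
    using Phir by simp
  have S0p: "S0 > 0" using S unfolding S0_def .
  have eq: "(Re (\<Phi>2 0) * Re (\<Phi> 0) - Re (\<Phi>1 0) * Re (\<Phi>1 0)) / (Re (\<Phi> 0) * Re (\<Phi> 0))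
     = (Re (c*c*T + 2*c*cnj c*N + cnj c * cnj c * cnj T) * S0 - (Re (c*A + cnj c * cnj A))\<^sup>2)/(S0*S0)"
    unfolding e0 e1 e2 using C S0p
    by (simp add: power2_eq_square divide_simps) (simp add: algebra_simps)
  show ?thesis using D unfolding fe eq .
qed



lemma levi_formula:
  fixes G :: "'k \<Rightarrow> complex \<Rightarrow> complex" and C :: real
  assumes K: "finite K" and hol: "\<forall>k\<in>K. G k holomorphic_on UNIV"
    and C: "C > 0" and S: "(\<Sum>k\<in>K. (cmod (G k 0))\<^sup>2) > 0"
  shows "\<exists>w1 w2. D2 (\<lambda>s. ln (C * (\<Sum>k\<in>K. (cmod (G k (of_real s)))\<^sup>2))) w1
     \<and> D2 (\<lambda>s. ln (C * (\<Sum>k\<in>K. (cmod (G k (\<i> * of_real s)))\<^sup>2))) w2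
     \<and> w1 + w2 = 4 * (Re (\<Sum>k\<in>K. deriv (G k) 0 * cnj (deriv (G k) 0)) * (\<Sum>k\<in>K. (cmod (G k 0))\<^sup>2)
            - (cmod (\<Sum>k\<in>K. deriv (G k) 0 * cnj (G k 0)))\<^sup>2) / ((\<Sum>k\<in>K. (cmod (G k 0))\<^sup>2) * (\<Sum>k\<in>K. (cmod (G k 0))\<^sup>2))"
proof -
  define S0 where "S0 = (\<Sum>k\<in>K. (cmod (G k 0))\<^sup>2)"
  define T where "T = (\<Sum>k\<in>K. deriv (deriv (G k)) 0 * cnj (G k 0))"
  define A where "A = (\<Sum>k\<in>K. deriv (G k) 0 * cnj (G k 0))"
  define N where "N = (\<Sum>k\<in>K. deriv (G k) 0 * cnj (deriv (G k) 0))"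
  note P1 = Phi_c[OF K hol C S, of 1, folded S0_def T_def A_def N_def]
  note P2 = Phi_c[OF K hol C S, of "\<i>", folded S0_def T_def A_def N_def]
  have S0p: "S0 > 0" using S unfolding S0_def .
  have "(Re (1*1*T + 2*1*cnj 1*N + cnj 1 * cnj 1 * cnj T) * S0 - (Re (1*A + cnj 1 * cnj A))\<^sup>2)/(S0*S0)
      + (Re (\<i>*\<i>*T + 2*\<i>*cnj \<i>*N + cnj \<i> * cnj \<i> * cnj T) * S0 - (Re (\<i>*A + cnj \<i> * cnj A))\<^sup>2)/(S0*S0)
      = 4 * (Re N * S0 - (cmod A)\<^sup>2) / (S0 * S0)"
    using S0p unfolding cmod_power2 by (simp add: divide_simps power2_eq_square) (simp add: algebra_simps)
  then show ?thesis using P1 P2 unfolding S0_def A_def N_def by auto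
qed

lemma cs_identity:
  fixes a b :: "'k \<Rightarrow> complex" and l :: complex
  shows "(\<Sum>k\<in>K. (a k - l * b k) * cnj (a k - l * b k))
    = (\<Sum>k\<in>K. a k * cnj (a k)) - cnj l * (\<Sum>k\<in>K. a k * cnj (b k)) - l * cnj (\<Sum>k\<in>K. a k * cnj (b k))
      + l * cnj l * (\<Sum>k\<in>K. b k * cnj (b k))"
  by (simp add: algebra_simps sum.distrib sum_subtractf sum_distrib_left)

lemma cauchy_schwarz_eq:
  fixes a b :: "'k \<Rightarrow> complex"
  assumes S: "(\<Sum>k\<in>K. (cmod (b k))\<^sup>2) > 0"
  shows "Re (\<Sum>k\<in>K. a k * cnj (a k)) * (\<Sum>k\<in>K. (cmod (b k))\<^sup>2) - (cmod (\<Sum>k\<in>K. a k * cnj (b k)))\<^sup>2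
     = (\<Sum>k\<in>K. (cmod (b k))\<^sup>2) * (\<Sum>k\<in>K. (cmod (a k - (\<Sum>k\<in>K. a k * cnj (b k)) / of_real (\<Sum>k\<in>K. (cmod (b k))\<^sup>2) * b k))\<^sup>2)"
proof -
  define S0 where "S0 = (\<Sum>k\<in>K. (cmod (b k))\<^sup>2)"
  define A where "A = (\<Sum>k\<in>K. a k * cnj (b k))"
  define N where "N = (\<Sum>k\<in>K. a k * cnj (a k))"
  define l where "l = A / of_real S0"
  have Sb: "(\<Sum>k\<in>K. b k * cnj (b k)) = of_real S0" unfolding S0_def by (simp add: cmod_sq_eq)
  have "of_real (\<Sum>k\<in>K. (cmod (a k - l * b k))\<^sup>2) = (\<Sum>k\<in>K. (a k - l * b k) * cnj (a k - l * b k))"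
    by (simp only: of_real_sum of_real_power cmod_sq_eq[symmetric])
  also have "\<dots> = N - cnj l * A - l * cnj A + l * cnj l * of_real S0"
    unfolding cs_identity Sb N_def A_def ..
  also have "\<dots> = N - A * cnj A / of_real S0"
    unfolding l_def using S unfolding S0_def by (simp add: field_simps)
  finally have e: "of_real (\<Sum>k\<in>K. (cmod (a k - l * b k))\<^sup>2) = N - A * cnj A / of_real S0" .
  have q: "A * cnj A / of_real S0 = of_real ((cmod A)\<^sup>2 / S0)"
    by (simp only: of_real_divide complex_norm_square)
  have "Re N * S0 - (cmod A)\<^sup>2 = S0 * Re (N - A * cnj A / of_real S0)"
    using S unfolding q S0_def[symmetric] by (simp add: field_simps)
  also have "\<dots> = S0 * (\<Sum>k\<in>K. (cmod (a k - l * b k))\<^sup>2)"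
    unfolding e[symmetric] by simp
  finally show ?thesis unfolding S0_def A_def N_def l_def .
qed

lemma cauchy_schwarz:
  fixes a b :: "'k \<Rightarrow> complex"
  assumes S: "(\<Sum>k\<in>K. (cmod (b k))\<^sup>2) > 0"
  shows "Re (\<Sum>k\<in>K. a k * cnj (a k)) * (\<Sum>k\<in>K. (cmod (b k))\<^sup>2) - (cmod (\<Sum>k\<in>K. a k * cnj (b k)))\<^sup>2 \<ge> 0"
  unfolding cauchy_schwarz_eq[OF S] using S by (intro mult_nonneg_nonneg sum_nonneg) auto

lemma cauchy_schwarz_zero:
  fixes a b :: "'k \<Rightarrow> complex"
  assumes K: "finite K" and S: "(\<Sum>k\<in>K. (cmod (b k))\<^sup>2) > 0"
  shows "Re (\<Sum>k\<in>K. a k * cnj (a k)) * (\<Sum>k\<in>K. (cmod (b k))\<^sup>2) - (cmod (\<Sum>k\<in>K. a k * cnj (b k)))\<^sup>2 = 0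
     \<longleftrightarrow> (\<exists>l. \<forall>k\<in>K. a k = l * b k)"
proof
  assume "Re (\<Sum>k\<in>K. a k * cnj (a k)) * (\<Sum>k\<in>K. (cmod (b k))\<^sup>2) - (cmod (\<Sum>k\<in>K. a k * cnj (b k)))\<^sup>2 = 0"
  then have "(\<Sum>k\<in>K. (cmod (a k - (\<Sum>k\<in>K. a k * cnj (b k)) / of_real (\<Sum>k\<in>K. (cmod (b k))\<^sup>2) * b k))\<^sup>2) = 0"
    unfolding cauchy_schwarz_eq[OF S] using S by simp
  then have "\<forall>k\<in>K. (cmod (a k - (\<Sum>k\<in>K. a k * cnj (b k)) / of_real (\<Sum>k\<in>K. (cmod (b k))\<^sup>2) * b k))\<^sup>2 = 0"
    using K by (subst (asm) sum_nonneg_eq_0_iff) auto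
  then have "\<forall>k\<in>K. a k = l * b k" if "l = (\<Sum>k\<in>K. a k * cnj (b k)) / of_real (\<Sum>k\<in>K. (cmod (b k))\<^sup>2)" for l
    unfolding that[symmetric] by auto
  then show "\<exists>l. \<forall>k\<in>K. a k = l * b k" by blast
next
  assume "\<exists>l. \<forall>k\<in>K. a k = l * b k"
  then obtain l where l: "\<forall>k\<in>K. a k = l * b k" by blast
  define S0 where "S0 = (\<Sum>k\<in>K. (cmod (b k))\<^sup>2)"
  have Sb: "(\<Sum>k\<in>K. b k * cnj (b k)) = of_real S0" unfolding S0_def
    by (simp only: of_real_sum of_real_power cmod_sq_eq)
  have "(\<Sum>k\<in>K. a k * cnj (a k)) = l * cnj l * (\<Sum>k\<in>K. b k * cnj (b k))"
    using l by (simp add: sum_distrib_left algebra_simps)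
  also have "\<dots> = of_real ((cmod l)\<^sup>2 * S0)" unfolding Sb of_real_mult complex_norm_square ..
  finally have N: "Re (\<Sum>k\<in>K. a k * cnj (a k)) = (cmod l)\<^sup>2 * S0" by simp
  have "(\<Sum>k\<in>K. a k * cnj (b k)) = l * (\<Sum>k\<in>K. b k * cnj (b k))"
    using l by (simp add: sum_distrib_left algebra_simps)
  then have "(\<Sum>k\<in>K. a k * cnj (b k)) = l * of_real S0" unfolding Sb .
  moreover have "S0 > 0" using S unfolding S0_def .
  ultimately have "cmod (\<Sum>k\<in>K. a k * cnj (b k)) = cmod l * S0"
    by (simp add: norm_mult)
  then show "Re (\<Sum>k\<in>K. a k * cnj (a k)) * (\<Sum>k\<in>K. (cmod (b k))\<^sup>2) - (cmod (\<Sum>k\<in>K. a k * cnj (b k)))\<^sup>2 = 0"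
    unfolding N S0_def[symmetric] by (simp add: power2_eq_square)
qed


definition detf :: "nat \<Rightarrow> (nat \<Rightarrow> nat \<Rightarrow> complex) \<Rightarrow> complex" where
  "detf n M = (\<Sum>p\<in>{p. p permutes {0..<n}}. of_int (sign p) * (\<Prod>i\<in>{0..<n}. M i (p i)))"

definition minor :: "nat \<Rightarrow> (nat \<Rightarrow> 'm \<Rightarrow> complex) \<Rightarrow> (nat \<Rightarrow> 'm) \<Rightarrow> complex" where
  "minor n a g = detf n (\<lambda>r s. a r (g s))"

lemma det_detf: "det (mat n n (\<lambda>(r,c). M r c)) = detf n M"
  unfolding detf_def
  by (subst det_def'[of _ n]) (auto intro!: sum.cong prod.cong simp: permutes_in_image)

lemma bij_PiE_perm:
  assumes pi: "\<pi> permutes {0..<n}"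
  shows "bij_betw (\<lambda>g. g \<circ> Hilbert_Choice.inv \<pi>) (PiE {0..<n} (\<lambda>_. M)) (PiE {0..<n} (\<lambda>_. M))"
proof (rule bij_betw_byWitness[where f' = "\<lambda>g. g \<circ> \<pi>"])
  have ipi: "Hilbert_Choice.inv \<pi> permutes {0..<n}" by (rule permutes_inv[OF pi])
  show "\<forall>g\<in>PiE {0..<n} (\<lambda>_. M). g \<circ> Hilbert_Choice.inv \<pi> \<circ> \<pi> = g"
    by (auto simp: fun_eq_iff permutes_inverses[OF pi])
  show "\<forall>g\<in>PiE {0..<n} (\<lambda>_. M). g \<circ> \<pi> \<circ> Hilbert_Choice.inv \<pi> = g"
    by (auto simp: fun_eq_iff permutes_inverses[OF pi])
  show "(\<lambda>g. g \<circ> Hilbert_Choice.inv \<pi>) ` PiE {0..<n} (\<lambda>_. M) \<subseteq> PiE {0..<n} (\<lambda>_. M)"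
    using permutes_in_image[OF ipi] permutes_not_in[OF ipi]
    by (auto simp: PiE_def extensional_def Pi_def)
  show "(\<lambda>g. g \<circ> \<pi>) ` PiE {0..<n} (\<lambda>_. M) \<subseteq> PiE {0..<n} (\<lambda>_. M)"
    using permutes_in_image[OF pi] permutes_not_in[OF pi]
    by (auto simp: PiE_def extensional_def Pi_def)
qed

lemma cb_inner:
  fixes a :: "nat \<Rightarrow> 'm \<Rightarrow> complex"
  assumes pi: "\<pi> permutes {0..<n}"
  shows "(\<Sum>\<sigma>\<in>{p. p permutes {0..<n}}. of_int (sign \<pi>) * of_int (sign \<sigma>) *
            ((\<Prod>r\<in>{0..<n}. a r ((g \<circ> Hilbert_Choice.inv \<pi>) (\<pi> r))) * (\<Prod>r\<in>{0..<n}. cnj (a r ((g \<circ> Hilbert_Choice.inv \<pi>) (\<sigma> r))))))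
       = (\<Sum>p\<in>{p. p permutes {0..<n}}. of_int (sign p) * (\<Prod>r\<in>{0..<n}. a r (g r) * cnj (a (p r) (g r))))"
proof -
  let ?P = "{p. p permutes {0..<n}}"
  have "(\<Sum>\<sigma>\<in>?P. of_int (sign \<pi>) * of_int (sign \<sigma>) *
            ((\<Prod>r\<in>{0..<n}. a r ((g \<circ> Hilbert_Choice.inv \<pi>) (\<pi> r))) * (\<Prod>r\<in>{0..<n}. cnj (a r ((g \<circ> Hilbert_Choice.inv \<pi>) (\<sigma> r))))))
     = (\<Sum>q\<in>?P. of_int (sign \<pi>) * of_int (sign (\<pi> \<circ> q)) *
            ((\<Prod>r\<in>{0..<n}. a r ((g \<circ> Hilbert_Choice.inv \<pi>) (\<pi> r))) * (\<Prod>r\<in>{0..<n}. cnj (a r ((g \<circ> Hilbert_Choice.inv \<pi>) ((\<pi> \<circ> q) r))))))"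
    by (rule setum_permutations_compose_left[OF pi])
  also have "\<dots> = (\<Sum>q\<in>?P. of_int (sign q) *
            ((\<Prod>r\<in>{0..<n}. a r (g r)) * (\<Prod>r\<in>{0..<n}. cnj (a r (g (q r))))))"
  proof (rule sum.cong[OF refl])
    fix q assume "q \<in> ?P"
    then have q: "q permutes {0..<n}" by simp
    have s: "sign (\<pi> \<circ> q) = sign \<pi> * sign q"
      by (rule sign_compose) (use pi q permutation_permutes in blast)+
    have "(of_int (sign \<pi>) * of_int (sign (\<pi> \<circ> q)) :: complex) = of_int (sign q)"
      unfolding s by (simp flip: of_int_mult add: mult.assoc[symmetric])
    then show "of_int (sign \<pi>) * of_int (sign (\<pi> \<circ> q)) *
            ((\<Prod>r\<in>{0..<n}. a r ((g \<circ> Hilbert_Choice.inv \<pi>) (\<pi> r))) * (\<Prod>r\<in>{0..<n}. cnj (a r ((g \<circ> Hilbert_Choice.inv \<pi>) ((\<pi> \<circ> q) r)))))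
       = of_int (sign q) * ((\<Prod>r\<in>{0..<n}. a r (g r)) * (\<Prod>r\<in>{0..<n}. cnj (a r (g (q r)))))"
      by (simp add: permutes_inverses[OF pi])
  qed
  also have "\<dots> = (\<Sum>p\<in>?P. of_int (sign (Hilbert_Choice.inv p)) *
            ((\<Prod>r\<in>{0..<n}. a r (g r)) * (\<Prod>r\<in>{0..<n}. cnj (a r (g (Hilbert_Choice.inv p r))))))"
    by (rule sum_permutations_inverse)
  also have "\<dots> = (\<Sum>p\<in>?P. of_int (sign p) * (\<Prod>r\<in>{0..<n}. a r (g r) * cnj (a (p r) (g r))))"
  proof (rule sum.cong[OF refl])
    fix p assume "p \<in> ?P"
    then have p: "p permutes {0..<n}" by simp
    have s: "sign (Hilbert_Choice.inv p) = sign p"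
      by (rule sign_inverse) (use p permutation_permutes in blast)
    have "(\<Prod>r\<in>{0..<n}. cnj (a r (g (Hilbert_Choice.inv p r)))) = (\<Prod>r\<in>{0..<n}. cnj (a (p r) (g r)))"
      by (subst prod.permute[OF p]) (simp add: o_def permutes_inverses[OF p])
    then show "of_int (sign (Hilbert_Choice.inv p)) * ((\<Prod>r\<in>{0..<n}. a r (g r)) * (\<Prod>r\<in>{0..<n}. cnj (a r (g (Hilbert_Choice.inv p r)))))
      = of_int (sign p) * (\<Prod>r\<in>{0..<n}. a r (g r) * cnj (a (p r) (g r)))"
      unfolding s by (simp add: prod.distrib)
  qed
  finally show ?thesis .
qed

lemma cb:
  fixes a :: "nat \<Rightarrow> 'm \<Rightarrow> complex"
  assumes M: "finite M"
  shows "of_nat (fact n) * detf n (\<lambda>r c. \<Sum>m\<in>M. a r m * cnj (a c m))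
     = (\<Sum>g\<in>PiE {0..<n} (\<lambda>_. M). minor n a g * cnj (minor n a g))"
proof -
  let ?P = "{p. p permutes {0..<n}}"
  let ?F = "PiE {0..<n} (\<lambda>_. M)"
  define X where "X = (\<Sum>g\<in>?F. \<Sum>p\<in>?P. of_int (sign p) * (\<Prod>r\<in>{0..<n}. a r (g r) * cnj (a (p r) (g r))))"
  have fF: "finite ?F" using M by (simp add: finite_PiE)
  have fP: "finite ?P" by (simp add: finite_permutations)
  have "detf n (\<lambda>r c. \<Sum>m\<in>M. a r m * cnj (a c m))
      = (\<Sum>p\<in>?P. \<Sum>g\<in>?F. of_int (sign p) * (\<Prod>r\<in>{0..<n}. a r (g r) * cnj (a (p r) (g r))))"
    unfolding detf_def
    by (rule sum.cong[OF refl]) (simp add: prod_sum_PiE[OF _ M] sum_distrib_left)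
  also have "\<dots> = X" unfolding X_def by (rule sum.swap)
  finally have L: "detf n (\<lambda>r c. \<Sum>m\<in>M. a r m * cnj (a c m)) = X" .
  have R1: "minor n a g * cnj (minor n a g) = (\<Sum>\<pi>\<in>?P. \<Sum>\<sigma>\<in>?P. of_int (sign \<pi>) * of_int (sign \<sigma>) *
            ((\<Prod>r\<in>{0..<n}. a r (g (\<pi> r))) * (\<Prod>r\<in>{0..<n}. cnj (a r (g (\<sigma> r))))))" for g
    unfolding minor_def detf_def
    by (simp add: sum_product cnj_sum cnj_prod algebra_simps)
  have "(\<Sum>g\<in>?F. minor n a g * cnj (minor n a g)) = (\<Sum>\<pi>\<in>?P. \<Sum>g\<in>?F. \<Sum>\<sigma>\<in>?P. of_int (sign \<pi>) * of_int (sign \<sigma>) *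
            ((\<Prod>r\<in>{0..<n}. a r (g (\<pi> r))) * (\<Prod>r\<in>{0..<n}. cnj (a r (g (\<sigma> r))))))"
    unfolding R1 by (rule sum.swap)
  also have "\<dots> = (\<Sum>\<pi>\<in>?P. X)"
  proof (rule sum.cong[OF refl])
    fix \<pi> assume "\<pi> \<in> ?P"
    then have pi: "\<pi> permutes {0..<n}" by simp
    have "(\<Sum>g\<in>?F. \<Sum>\<sigma>\<in>?P. of_int (sign \<pi>) * of_int (sign \<sigma>) *
            ((\<Prod>r\<in>{0..<n}. a r (g (\<pi> r))) * (\<Prod>r\<in>{0..<n}. cnj (a r (g (\<sigma> r))))))
       = (\<Sum>g\<in>?F. \<Sum>\<sigma>\<in>?P. of_int (sign \<pi>) * of_int (sign \<sigma>) *
            ((\<Prod>r\<in>{0..<n}. a r ((g \<circ> Hilbert_Choice.inv \<pi>) (\<pi> r))) * (\<Prod>r\<in>{0..<n}. cnj (a r ((g \<circ> Hilbert_Choice.inv \<pi>) (\<sigma> r))))))"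
      by (rule sum.reindex_bij_betw[OF bij_PiE_perm[OF pi], symmetric])
    also have "\<dots> = X" unfolding X_def by (rule sum.cong[OF refl]) (rule cb_inner[OF pi])
    finally show "(\<Sum>g\<in>?F. \<Sum>\<sigma>\<in>?P. of_int (sign \<pi>) * of_int (sign \<sigma>) *
            ((\<Prod>r\<in>{0..<n}. a r (g (\<pi> r))) * (\<Prod>r\<in>{0..<n}. cnj (a r (g (\<sigma> r)))))) = X" .
  qed
  also have "\<dots> = of_nat (fact n) * X"
    by (simp add: card_permutations)
  finally show ?thesis unfolding L by simp
qed


definition Dv :: "nat \<Rightarrow> (nat \<Rightarrow> nat \<Rightarrow> complex) \<Rightarrow> (nat \<Rightarrow> nat \<Rightarrow> complex) \<Rightarrow> complex" where
  "Dv n M0 M1 = (\<Sum>r<n. detf n (\<lambda>i j. if i = r then M1 i j else M0 i j))"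

lemma prod_row: assumes "r < (n::nat)"
  shows "(\<Prod>i\<in>{0..<n}. (if i = r then x i else y i)) = x r * (\<Prod>i\<in>{0..<n}-{r}. y i)"
proof -
  have "(\<Prod>i\<in>{0..<n}. (if i = r then x i else y i)) = (if r = r then x r else y r) * (\<Prod>i\<in>{0..<n}-{r}. (if i = r then x i else y i))"
    using assms by (intro prod.remove) auto
  also have "(\<Prod>i\<in>{0..<n}-{r}. (if i = r then x i else y i)) = (\<Prod>i\<in>{0..<n}-{r}. y i)"
    by (rule prod.cong) auto
  finally show ?thesis by simp
qed

lemma detf_row_sum:
  assumes r: "r < n" and L: "finite L"
  shows "detf n (\<lambda>i j. if i = r then (\<Sum>l\<in>L. c l * v l j) else M i j)
       = (\<Sum>l\<in>L. c l * detf n (\<lambda>i j. if i = r then v l j else M i j))"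
proof -
  have "detf n (\<lambda>i j. if i = r then (\<Sum>l\<in>L. c l * v l j) else M i j)
      = (\<Sum>p\<in>{p. p permutes {0..<n}}. \<Sum>l\<in>L. c l * (of_int (sign p) * (v l (p r) * (\<Prod>i\<in>{0..<n}-{r}. M i (p i)))))"
    unfolding detf_def
    by (rule sum.cong[OF refl], subst prod_row[OF r]) (simp add: sum_distrib_left sum_distrib_right algebra_simps)
  also have "\<dots> = (\<Sum>l\<in>L. c l * detf n (\<lambda>i j. if i = r then v l j else M i j))"
    unfolding detf_def
    by (subst sum.swap) (simp add: prod_row[OF r] sum_distrib_left)
  finally show ?thesis .
qed

lemma detf_row_add:
  assumes r: "r < n"
  shows "detf n (\<lambda>i j. if i = r then u i j + w i j else M i j)
       = detf n (\<lambda>i j. if i = r then u i j else M i j) + detf n (\<lambda>i j. if i = r then w i j else M i j)"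
  unfolding detf_def
  by (simp add: prod_row[OF r] sum.distrib[symmetric] algebra_simps)

lemma detf_row_zero:
  assumes r: "r < n"
  shows "detf n (\<lambda>i j. if i = r then 0 else M i j) = 0"
  unfolding detf_def by (simp add: prod_row[OF r])

lemma detf_same_row:
  shows "detf n (\<lambda>i j. if i = r then M r j else M i j) = detf n M"
proof -
  have "(\<lambda>i j. if i = r then M r j else M i j) = M" by (intro ext) auto
  then show ?thesis by simp
qed

lemma detf_cong:
  assumes "\<forall>i<n. \<forall>j<n. M i j = M' i j"
  shows "detf n M = detf n M'"
  unfolding detf_def
  by (rule sum.cong[OF refl]) (use assms in \<open>auto intro!: prod.cong simp: permutes_in_image\<close>)

lemma detf_identical_rows:
  assumes r: "r < n" and l: "l < n" and rl: "l \<noteq> r"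
  shows "detf n (\<lambda>i j. if i = r then M l j else M i j) = 0"
proof -
  let ?A = "mat n n (\<lambda>(i,j). if i = r then M l j else M i j)"
  have "det ?A = 0"
    by (rule det_identical_rows[of _ n r l]) (use r l rl in \<open>auto intro!: eq_vecI\<close>)
  then show ?thesis
    using det_detf[of n "\<lambda>i j. if i = r then M l j else M i j"] by simp
qed

lemma detf_row_comb:
  assumes r: "r < n"
  shows "detf n (\<lambda>i j. if i = r then (\<Sum>l<n. c l * M l j) else M i j) = c r * detf n M"
proof -
  have "detf n (\<lambda>i j. if i = r then (\<Sum>l<n. c l * M l j) else M i j)
     = (\<Sum>l<n. c l * detf n (\<lambda>i j. if i = r then M l j else M i j))"
    by (rule detf_row_sum[OF r]) simp
  also have "\<dots> = (\<Sum>l<n. if l = r then c r * detf n M else 0)"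
    by (rule sum.cong[OF refl]) (auto simp: detf_identical_rows r detf_same_row)
  also have "\<dots> = c r * detf n M" using r by simp
  finally show ?thesis .
qed

lemma Dv_comb:
  assumes "\<forall>r<n. \<forall>j<n. M1 r j = (\<Sum>l<n. \<xi> r l * M0 l j)"
  shows "Dv n M0 M1 = (\<Sum>r<n. \<xi> r r) * detf n M0"
proof -
  have "Dv n M0 M1 = (\<Sum>r<n. detf n (\<lambda>i j. if i = r then (\<Sum>l<n. \<xi> r l * M0 l j) else M0 i j))"
    unfolding Dv_def
    by (rule sum.cong[OF refl], rule detf_cong) (use assms in auto)
  also have "\<dots> = (\<Sum>r<n. \<xi> r r * detf n M0)"
    by (rule sum.cong[OF refl]) (rule detf_row_comb, simp)
  finally show ?thesis by (simp add: sum_distrib_right)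
qed

lemma Dv_add:
  shows "Dv n M0 (\<lambda>i j. M1 i j + M2 i j) = Dv n M0 M1 + Dv n M0 M2"
  unfolding Dv_def sum.distrib[symmetric]
  by (rule sum.cong[OF refl]) (simp add: detf_row_add)

lemma Dv_zero:
  assumes "\<forall>i<n. \<forall>j<n. M1 i j = 0"
  shows "Dv n M0 M1 = 0"
proof -
  have "Dv n M0 M1 = (\<Sum>r<n. detf n (\<lambda>i j. if i = r then 0 else M0 i j))"
    unfolding Dv_def
    by (rule sum.cong[OF refl]) (unfold detf_def, rule sum.cong[OF refl], use assms in \<open>auto intro!: prod.cong simp: permutes_in_image\<close>)
  also have "\<dots> = 0" by (simp add: detf_row_zero)
  finally show ?thesis .
qed


lemma Dv_cong:
  assumes "\<forall>i<n. \<forall>j<n. M0 i j = M0' i j" "\<forall>i<n. \<forall>j<n. M1 i j = M1' i j"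
  shows "Dv n M0 M1 = Dv n M0' M1'"
  unfolding Dv_def by (rule sum.cong[OF refl], rule detf_cong) (use assms in auto)

lemma sum_single:
  assumes "finite A" "a \<in> A" "\<forall>x\<in>A. x \<noteq> a \<longrightarrow> f x = 0"
  shows "sum f A = f a"
proof -
  have "sum f A = f a + sum f (A - {a})" by (rule sum.remove[OF assms(1,2)])
  also have "sum f (A - {a}) = 0" by (rule sum.neutral) (use assms(3) in auto)
  finally show ?thesis by simp
qed

lemma Dv_col:
  assumes r0: "r0 < n"
  shows "Dv n M (\<lambda>i j. if j = r0 then c i else 0) = detf n (\<lambda>i j. if j = r0 then c i else M i j)"
proof -
  let ?P = "{p. p permutes {0..<n}}"
  have "Dv n M (\<lambda>i j. if j = r0 then c i else 0)
     = (\<Sum>r<n. \<Sum>p\<in>?P. of_int (sign p) * (\<Prod>i\<in>{0..<n}. (if i = r then (if p i = r0 then c i else 0) else M i (p i))))"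
    unfolding Dv_def detf_def by (intro sum.cong refl prod.cong)
  also have "\<dots> = (\<Sum>p\<in>?P. of_int (sign p) * (\<Sum>r<n. (\<Prod>i\<in>{0..<n}. (if i = r then (if p i = r0 then c i else 0) else M i (p i)))))"
    by (subst sum.swap) (simp add: sum_distrib_left)
  also have "\<dots> = (\<Sum>p\<in>?P. of_int (sign p) * (\<Prod>i\<in>{0..<n}. (if p i = r0 then c i else M i (p i))))"
  proof (rule sum.cong[OF refl])
    fix p assume "p \<in> ?P"
    then have p: "p permutes {0..<n}" by simp
    define rs where "rs = Hilbert_Choice.inv p r0"
    have rs: "rs < n" "p rs = r0" unfolding rs_def
      using permutes_inv[OF p] r0 permutes_in_image permutes_inverses[OF p] by auto
    have iff: "p i = r0 \<longleftrightarrow> i = rs" for i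
      using rs(2) permutes_inj[OF p] by (auto simp: inj_def)
    have "(\<Sum>r<n. (\<Prod>i\<in>{0..<n}. (if i = r then (if p i = r0 then c i else 0) else M i (p i))))
       = (\<Prod>i\<in>{0..<n}. (if i = rs then (if p i = r0 then c i else 0) else M i (p i)))"
    proof (rule sum_single)
      show "\<forall>x\<in>{..<n}. x \<noteq> rs \<longrightarrow> (\<Prod>i = 0..<n. if i = x then if p i = r0 then c i else 0 else M i (p i)) = 0"
      proof (intro ballI impI)
        fix x assume x: "x \<in> {..<n}" "x \<noteq> rs"
        have "x \<in> {0..<n}" "p x \<noteq> r0" using x iff by auto
        then show "(\<Prod>i = 0..<n. if i = x then if p i = r0 then c i else 0 else M i (p i)) = 0"
          by (intro prod_zero[OF _ bexI[of _ x]]) auto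
      qed
    qed (use rs in auto)
    also have "\<dots> = (\<Prod>i\<in>{0..<n}. (if p i = r0 then c i else M i (p i)))"
      by (rule prod.cong) (auto simp: iff)
    finally show "of_int (sign p) * (\<Sum>r<n. (\<Prod>i\<in>{0..<n}. (if i = r then (if p i = r0 then c i else 0) else M i (p i))))
      = of_int (sign p) * (\<Prod>i\<in>{0..<n}. (if p i = r0 then c i else M i (p i)))" by simp
  qed
  also have "\<dots> = detf n (\<lambda>i j. if j = r0 then c i else M i j)" unfolding detf_def ..
  finally show ?thesis .
qed

lemma mat_inverse_ex:
  assumes A: "A \<in> carrier_mat n n" and d: "det A \<noteq> (0::complex)"
  shows "\<exists>B\<in>carrier_mat n n. A * B = 1\<^sub>m n \<and> B * A = 1\<^sub>m n"
  using det_non_zero_imp_unit[OF A d, of "()"] unfolding Units_def ring_mat_def by auto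

lemma pluecker:
  fixes a0 a1 :: "nat \<Rightarrow> 'm \<Rightarrow> complex"
  assumes Col: "finite Col"
    and f0: "f0 \<in> PiE {0..<n} (\<lambda>_. Col)" and f0nz: "minor n a0 f0 \<noteq> 0"
    and H: "\<forall>f\<in>PiE {0..<n} (\<lambda>_. Col). Dv n (\<lambda>r s. a0 r (f s)) (\<lambda>r s. a1 r (f s)) = lam * minor n a0 f"
  shows "\<exists>\<xi>. \<forall>r<n. \<forall>m\<in>Col. a1 r m = (\<Sum>l<n. \<xi> r l * a0 l m)"
proof -
  define A where "A = mat n n (\<lambda>(r,s). a0 r (f0 s))"
  define A1 where "A1 = mat n n (\<lambda>(r,s). a1 r (f0 s))"
  have Ac: "A \<in> carrier_mat n n" and A1c: "A1 \<in> carrier_mat n n" unfolding A_def A1_def by auto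
  have dA: "det A = minor n a0 f0" unfolding A_def minor_def det_detf ..
  obtain B where Bc: "B \<in> carrier_mat n n" and AB: "A * B = 1\<^sub>m n" and BA: "B * A = 1\<^sub>m n"
    using mat_inverse_ex[OF Ac] dA f0nz by auto
  define X where "X = A1 * B"
  define \<xi> where "\<xi> r l = X $$ (r,l)" for r l
  have XA: "X * A = A1" unfolding X_def using A1c Bc Ac BA
    by (metis assoc_mult_mat right_mult_one_mat)
  have comb0: "a1 r (f0 s) = (\<Sum>l<n. \<xi> r l * a0 l (f0 s))" if "r < n" "s < n" for r s
  proof -
    have "a1 r (f0 s) = (X * A) $$ (r,s)" unfolding XA A1_def using that by simp
    also have "\<dots> = (\<Sum>l<n. \<xi> r l * a0 l (f0 s))"
      using that Ac Bc A1c unfolding X_def \<xi>_def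
      by (simp add: scalar_prod_def A_def atLeast0LessThan)
    finally show ?thesis .
  qed
  define \<epsilon> where "\<epsilon> r m = a1 r m - (\<Sum>l<n. \<xi> r l * a0 l m)" for r m
  have a1eq: "(\<lambda>r s. a1 r (f s)) = (\<lambda>r s. \<epsilon> r (f s) + (\<Sum>l<n. \<xi> r l * a0 l (f s)))" for f
    unfolding \<epsilon>_def by auto
  have Deps: "Dv n (\<lambda>r s. a0 r (f s)) (\<lambda>r s. \<epsilon> r (f s)) = (lam - (\<Sum>r<n. \<xi> r r)) * minor n a0 f"
    if f: "f \<in> PiE {0..<n} (\<lambda>_. Col)" for f
  proof -
    have "lam * minor n a0 f = Dv n (\<lambda>r s. a0 r (f s)) (\<lambda>r s. a1 r (f s))" using H f by simp
    also have "\<dots> = Dv n (\<lambda>r s. a0 r (f s)) (\<lambda>r s. \<epsilon> r (f s)) + Dv n (\<lambda>r s. a0 r (f s)) (\<lambda>r s. (\<Sum>l<n. \<xi> r l * a0 l (f s)))"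
      unfolding a1eq by (rule Dv_add)
    also have "Dv n (\<lambda>r s. a0 r (f s)) (\<lambda>r s. (\<Sum>l<n. \<xi> r l * a0 l (f s))) = (\<Sum>r<n. \<xi> r r) * minor n a0 f"
      unfolding minor_def by (rule Dv_comb) auto
    finally show ?thesis by (simp add: algebra_simps)
  qed
  have "Dv n (\<lambda>r s. a0 r (f0 s)) (\<lambda>r s. \<epsilon> r (f0 s)) = 0"
    by (rule Dv_zero) (auto simp: \<epsilon>_def comb0)
  with Deps[OF f0] f0nz have lam: "lam = (\<Sum>r<n. \<xi> r r)" by simp
  have Deps0: "Dv n (\<lambda>r s. a0 r (f s)) (\<lambda>r s. \<epsilon> r (f s)) = 0" if "f \<in> PiE {0..<n} (\<lambda>_. Col)" for f
    using Deps[OF that] lam by simp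
  have "\<epsilon> i m = 0" if m: "m \<in> Col" and i: "i < n" for i m
  proof -
    define cv where "cv = vec n (\<lambda>i. \<epsilon> i m)"
    define x where "x = B *\<^sub>v cv"
    have cvc: "cv \<in> carrier_vec n" and xc: "x \<in> carrier_vec n" unfolding cv_def x_def using Bc by auto
    have Ax: "A *\<^sub>v x = cv" unfolding x_def using Ac Bc cvc
      by (simp add: assoc_mult_mat_vec[symmetric] AB)
    have x0: "x $ r0 = 0" if r0: "r0 < n" for r0
    proof -
      define f where "f = f0(r0 := m)"
      have f: "f \<in> PiE {0..<n} (\<lambda>_. Col)" unfolding f_def using f0 m r0 by (auto simp: PiE_def extensional_def Pi_def)
      have "0 = Dv n (\<lambda>r s. a0 r (f s)) (\<lambda>r s. \<epsilon> r (f s))" using Deps0[OF f] by simp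
      also have "\<dots> = Dv n (\<lambda>r s. a0 r (f s)) (\<lambda>i j. if j = r0 then \<epsilon> i m else 0)"
        by (rule Dv_cong) (auto simp: f_def \<epsilon>_def comb0)
      also have "\<dots> = detf n (\<lambda>i j. if j = r0 then \<epsilon> i m else a0 i (f j))"
        by (rule Dv_col[OF r0])
      also have "\<dots> = detf n (\<lambda>i j. if j = r0 then \<epsilon> i m else a0 i (f0 j))"
        by (rule detf_cong) (auto simp: f_def)
      also have "\<dots> = det (replace_col A cv r0)"
        unfolding replace_col_def A_def cv_def det_detf[symmetric]
        by (intro arg_cong[of _ _ det] eq_matI) auto
      also have "\<dots> = x $ r0 * det A"
        unfolding Ax[symmetric] by (rule cramer_lemma_mat[OF Ac xc r0])
      finally show ?thesis using dA f0nz by simp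
    qed
    have "x = 0\<^sub>v n" using x0 xc by (intro eq_vecI) auto
    then have "cv = A *\<^sub>v 0\<^sub>v n" using Ax by simp
    also have "\<dots> = 0\<^sub>v n" using Ac by (auto intro!: eq_vecI simp: scalar_prod_def)
    finally have "cv = 0\<^sub>v n" .
    then have "cv $ i = 0" using i by simp
    then show ?thesis using i unfolding cv_def by simp
  qed
  then have "\<forall>r<n. \<forall>m\<in>Col. a1 r m = (\<Sum>l<n. \<xi> r l * a0 l m)"
    unfolding \<epsilon>_def by simp
  then show ?thesis by blast
qed


lemma path_end_append: "path_end h j (as @ bs) = path_end h (path_end h j as) bs"
  by (induction as arbitrary: j) auto

lemma is_path_append: "is_path h t j (as @ bs) \<longleftrightarrow> is_path h t j as \<and> is_path h t (path_end h j as) bs"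
  by (induction as arbitrary: j) auto

lemma path_mat_cong: "(\<forall>a\<in>set as. V a = V' a) \<Longrightarrow> path_mat h d V j as = path_mat h d V' j as"
  by (induction as arbitrary: j) auto

locale quiv =
  fixes Q0 :: "'v set" and Q1 :: "'e set" and h t :: "'e \<Rightarrow> 'v" and n d :: "'v \<Rightarrow> nat"
  assumes fin0: "finite Q0" and fin1: "finite Q1" and ht: "\<forall>a\<in>Q1. h a \<in> Q0 \<and> t a \<in> Q0"
    and acyc: "no_oriented_cycle Q0 Q1 h t"
begin

lemma path_end_in: "j \<in> Q0 \<Longrightarrow> set as \<subseteq> Q1 \<Longrightarrow> is_path h t j as \<Longrightarrow> path_end h j as \<in> Q0"
  using ht by (induction as arbitrary: j) auto

lemma path_mat_carrier:
  assumes V: "\<forall>a\<in>Q1. V a \<in> carrier_mat (d (h a)) (d (t a))"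
  shows "set as \<subseteq> Q1 \<Longrightarrow> is_path h t j as \<Longrightarrow> path_mat h d V j as \<in> carrier_mat (d (path_end h j as)) (d j)"
  using V by (induction as arbitrary: j) (auto intro!: mult_carrier_mat)

lemma path_mat_snoc:
  assumes V: "\<forall>a\<in>Q1. V a \<in> carrier_mat (d (h a)) (d (t a))"
  shows "set as \<subseteq> Q1 \<Longrightarrow> is_path h t j as \<Longrightarrow> a \<in> Q1 \<Longrightarrow> t a = path_end h j as \<Longrightarrow>
     path_mat h d V j (as @ [a]) = V a * path_mat h d V j as"
proof (induction as arbitrary: j)
  case Nil
  then show ?case using V by (auto simp: left_mult_one_mat right_mult_one_mat)
next
  case (Cons b as)
  then have "path_mat h d V j ((b # as) @ [a]) = (V a * path_mat h d V (h b) as) * V b" by simp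
  also have "\<dots> = V a * (path_mat h d V (h b) as * V b)"
    using Cons.prems V path_mat_carrier[OF V, of as "h b"]
    by (intro assoc_mult_mat[of _ "d (h a)" "d (t a)" _ "d (h b)" _ "d (t b)"]) auto
  finally show ?case by simp
qed

lemma path_length:
  assumes j: "j \<in> Q0" and as: "set as \<subseteq> Q1" and p: "is_path h t j as"
  shows "length as < card Q0"
proof (rule ccontr)
  assume "\<not> length as < card Q0"
  then have len: "card Q0 < card {0..length as}" by simp
  define f where "f k = path_end h j (take k as)" for k
  have fk: "f k \<in> Q0" for k
  proof -
    have "set (take k as) \<subseteq> Q1" using as set_take_subset by (rule order_trans[rotated])
    moreover have "is_path h t j (take k as)" using p is_path_append[of h t j "take k as" "drop k as"] by simp
    ultimately show "f k \<in> Q0" unfolding f_def by (rule path_end_in[OF j])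
  qed
  have fin: "f ` {0..length as} \<subseteq> Q0" using fk by auto
  have "\<not> inj_on f {0..length as}"
  proof
    assume "inj_on f {0..length as}"
    from card_inj_on_le[OF this fin fin0] len show False by simp
  qed
  then obtain p q where pq: "p \<in> {0..length as}" "q \<in> {0..length as}" "p \<noteq> q" "f p = f q"
    unfolding inj_on_def by blast
  have "\<exists>p q. p < q \<and> q \<le> length as \<and> f p = f q"
  proof (cases "p < q")
    case True
    then show ?thesis using pq by (intro exI[of _ p] exI[of _ q]) auto
  next
    case False
    then have "q < p" using pq(3) by simp
    then show ?thesis using pq by (intro exI[of _ q] exI[of _ p]) auto
  qed
  then obtain p q where pq: "p < q" "q \<le> length as" "f p = f q" by blast
  define bs where "bs = take (q - p) (drop p as)"
  have tq: "take q as = take p as @ bs" unfolding bs_def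
    using take_add[of p "q - p" as] pq(1) by simp
  have pq': "is_path h t j (take q as)" using p is_path_append[of h t j "take q as" "drop q as"] by simp
  then have bp: "is_path h t (f p) bs" unfolding f_def tq is_path_append by simp
  have be: "path_end h (f p) bs = f p" using pq(3) unfolding f_def tq path_end_append by simp
  have bne: "bs \<noteq> []" unfolding bs_def using pq by simp
  have "set bs \<subseteq> set (drop p as)" unfolding bs_def by (rule set_take_subset)
  also have "\<dots> \<subseteq> set as" by (rule set_drop_subset)
  finally have bs1: "set bs \<subseteq> Q1" using as by simp
  have "\<exists>j as. j \<in> Q0 \<and> as \<noteq> [] \<and> set as \<subseteq> Q1 \<and> is_path h t j as \<and> path_end h j as = j"
    by (intro exI[of _ "f p"] exI[of _ bs]) (simp add: fk bne bs1 bp be)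
  then show False using acyc unfolding no_oriented_cycle_def by simp
qed

lemma finite_paths: "finite (paths_to Q0 Q1 h t i)"
proof (rule finite_subset)
  show "paths_to Q0 Q1 h t i \<subseteq> Q0 \<times> {as. set as \<subseteq> Q1 \<and> length as \<le> card Q0}"
    unfolding paths_to_def using path_length by fastforce
  show "finite (Q0 \<times> {as. set as \<subseteq> Q1 \<and> length as \<le> card Q0})"
    using fin0 fin1 by (intro finite_cartesian_product finite_lists_length_le)
qed

end


context quiv begin

definition Bm :: "('v,'e) qpoint \<Rightarrow> 'v \<times> 'e list \<Rightarrow> complex mat" where
  "Bm y \<gamma> = path_mat h d (fst y) (fst \<gamma>) (snd \<gamma>) * snd y (fst \<gamma>)"

lemma paths_to_iff: "(j, as) \<in> paths_to Q0 Q1 h t i \<longleftrightarrow> j \<in> Q0 \<and> set as \<subseteq> Q1 \<and> is_path h t j as \<and> path_end h j as = i"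
  unfolding paths_to_def by simp

lemma wfV: "wf_point Q0 Q1 h t n d y \<Longrightarrow> \<forall>a\<in>Q1. fst y a \<in> carrier_mat (d (h a)) (d (t a))"
  unfolding wf_point_def by auto

lemma wfE: "wf_point Q0 Q1 h t n d y \<Longrightarrow> i \<in> Q0 \<Longrightarrow> snd y i \<in> carrier_mat (d i) (n i)"
  unfolding wf_point_def by auto

lemma Bm_carrier:
  assumes y: "wf_point Q0 Q1 h t n d y" and g: "\<gamma> \<in> paths_to Q0 Q1 h t i"
  shows "Bm y \<gamma> \<in> carrier_mat (d i) (n (fst \<gamma>))"
proof -
  obtain j as where ga: "\<gamma> = (j, as)" by (cases \<gamma>)
  have "path_mat h d (fst y) j as \<in> carrier_mat (d i) (d j)"
    using path_mat_carrier[OF wfV[OF y], of as j] g unfolding ga paths_to_iff by auto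
  moreover have "snd y j \<in> carrier_mat (d j) (n j)" using wfE[OF y] g unfolding ga paths_to_iff by auto
  ultimately show ?thesis unfolding Bm_def ga by auto
qed

lemma Bm_triv:
  assumes y: "wf_point Q0 Q1 h t n d y" and i: "i \<in> Q0"
  shows "(i, []) \<in> paths_to Q0 Q1 h t i" "Bm y (i, []) = snd y i"
  using i wfE[OF y i] unfolding paths_to_iff Bm_def by (auto simp: left_mult_one_mat)

lemma Bm_snoc:
  assumes y: "wf_point Q0 Q1 h t n d y" and g: "(j, as) \<in> paths_to Q0 Q1 h t (t a)" and a: "a \<in> Q1"
  shows "(j, as @ [a]) \<in> paths_to Q0 Q1 h t (h a)" "Bm y (j, as @ [a]) = fst y a * Bm y (j, as)"
proof -
  show "(j, as @ [a]) \<in> paths_to Q0 Q1 h t (h a)"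
    using g a unfolding paths_to_iff by (simp add: is_path_append path_end_append)
  have pm: "path_mat h d (fst y) j as \<in> carrier_mat (d (t a)) (d j)"
    using path_mat_carrier[OF wfV[OF y], of as j] g unfolding paths_to_iff by auto
  have "Bm y (j, as @ [a]) = (fst y a * path_mat h d (fst y) j as) * snd y j"
    unfolding Bm_def using path_mat_snoc[OF wfV[OF y], of as j a] g a unfolding paths_to_iff by simp
  also have "\<dots> = fst y a * (path_mat h d (fst y) j as * snd y j)"
    using pm wfV[OF y] a wfE[OF y, of j] g unfolding paths_to_iff
    by (intro assoc_mult_mat[of _ "d (h a)" "d (t a)" _ "d j" _ "n j"]) auto
  finally show "Bm y (j, as @ [a]) = fst y a * Bm y (j, as)" unfolding Bm_def by simp
qed

lemma mult_entry:
  assumes "A \<in> carrier_mat nr m" "B \<in> carrier_mat m nc" "r < nr" "c < nc"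
  shows "(A * B) $$ (r, c) = (\<Sum>s<m. A $$ (r, s) * B $$ (s, c))"
  using assms by (simp add: scalar_prod_def atLeast0LessThan)

lemma mult_vec_entry:
  assumes "A \<in> carrier_mat nr m" "v \<in> carrier_vec m" "r < nr"
  shows "(A *\<^sub>v v) $ r = (\<Sum>s<m. A $$ (r, s) * vec_index v s)"
  using assms by (simp add: scalar_prod_def atLeast0LessThan)

lemma sum_sq_zero:
  fixes w :: "nat \<Rightarrow> complex"
  assumes "(\<Sum>s<m. w s * cnj (w s)) = 0"
  shows "\<forall>s<m. w s = 0"
proof -
  have e: "of_real (\<Sum>s<m. (cmod (w s))\<^sup>2) = (\<Sum>s<m. w s * cnj (w s))"
    by (simp only: of_real_sum of_real_power cmod_sq_eq[symmetric])
  have "of_real (\<Sum>s<m. (cmod (w s))\<^sup>2) = (0::complex)"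
    unfolding e by (rule assms)
  then have "(\<Sum>s<m. (cmod (w s))\<^sup>2) = 0" by (simp only: of_real_eq_0_iff)
  then have "\<forall>s\<in>{..<m}. (cmod (w s))\<^sup>2 = 0" by (subst (asm) sum_nonneg_eq_0_iff) auto
  then show ?thesis by simp
qed

lemma span:
  assumes st: "stable Q0 Q1 h t n d x" and j: "j \<in> Q0"
    and w: "\<forall>\<gamma>\<in>paths_to Q0 Q1 h t j. \<forall>k<n (fst \<gamma>). (\<Sum>s<d j. w s * Bm x \<gamma> $$ (s,k)) = 0"
  shows "\<forall>s<d j. w s = 0"
proof -
  have x: "wf_point Q0 Q1 h t n d x" using st unfolding stable_def by simp
  define ann where "ann j' y \<longleftrightarrow> (\<forall>\<gamma>\<in>paths_to Q0 Q1 h t j'. \<forall>k<n (fst \<gamma>). (\<Sum>s<d j'. cnj (vec_index y s) * Bm x \<gamma> $$ (s,k)) = 0)" for j' y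
  define U where "U j' = {u \<in> carrier_vec (d j'). \<forall>y\<in>carrier_vec (d j'). ann j' y \<longrightarrow> (\<Sum>s<d j'. cnj (vec_index y s) * vec_index u s) = 0}" for j'
  have sub: "\<forall>i\<in>Q0. subspace_vec (d i) (U i)"
  proof (intro ballI)
    fix i assume "i \<in> Q0"
    have add: "u + w \<in> U i" if "u \<in> U i" "w \<in> U i" for u w
    proof -
      have uc: "u \<in> carrier_vec (d i)" and wc: "w \<in> carrier_vec (d i)" using that unfolding U_def by auto
      have "(\<Sum>s<d i. cnj (vec_index y s) * vec_index (u + w) s) = 0" if y: "y \<in> carrier_vec (d i)" "ann i y" for y
      proof -
        have "(\<Sum>s<d i. cnj (vec_index y s) * vec_index (u + w) s)
            = (\<Sum>s<d i. cnj (vec_index y s) * vec_index u s) + (\<Sum>s<d i. cnj (vec_index y s) * vec_index w s)"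
          unfolding sum.distrib[symmetric] using wc by (intro sum.cong refl) (simp add: algebra_simps)
        then show ?thesis using that \<open>u \<in> U i\<close> \<open>w \<in> U i\<close> unfolding U_def by simp
      qed
      then show ?thesis unfolding U_def using uc wc by auto
    qed
    have smul: "c \<cdot>\<^sub>v u \<in> U i" if "u \<in> U i" for c u
    proof -
      have uc: "u \<in> carrier_vec (d i)" using that unfolding U_def by auto
      have "(\<Sum>s<d i. cnj (vec_index y s) * vec_index (c \<cdot>\<^sub>v u) s) = 0" if y: "y \<in> carrier_vec (d i)" "ann i y" for y
      proof -
        have "(\<Sum>s<d i. cnj (vec_index y s) * vec_index (c \<cdot>\<^sub>v u) s)
            = c * (\<Sum>s<d i. cnj (vec_index y s) * vec_index u s)"
          unfolding sum_distrib_left using uc by (intro sum.cong refl) (simp add: algebra_simps)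
        then show ?thesis using that \<open>u \<in> U i\<close> unfolding U_def by simp
      qed
      then show ?thesis unfolding U_def using uc by auto
    qed
    have zero: "0\<^sub>v (d i) \<in> U i" unfolding U_def by simp
    show "subspace_vec (d i) (U i)"
      unfolding subspace_vec_def using add smul zero by (auto simp: U_def)
  qed
  have arr: "\<forall>a\<in>Q1. \<forall>u\<in>U (t a). fst x a *\<^sub>v u \<in> U (h a)"
  proof (intro ballI)
    fix a u assume a: "a \<in> Q1" and u: "u \<in> U (t a)"
    define X where "X = fst x a"
    have Xc: "X \<in> carrier_mat (d (h a)) (d (t a))" unfolding X_def using wfV[OF x] a by auto
    have uc: "u \<in> carrier_vec (d (t a))" using u unfolding U_def by auto
    have "(\<Sum>r<d (h a). cnj (vec_index y r) * vec_index (X *\<^sub>v u) r) = 0" if y: "y \<in> carrier_vec (d (h a))" "ann (h a) y" for y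
    proof -
      define y' where "y' = vec (d (t a)) (\<lambda>s. \<Sum>r<d (h a). vec_index y r * cnj (X $$ (r,s)))"
      have y'c: "y' \<in> carrier_vec (d (t a))" unfolding y'_def by simp
      have cy': "cnj (vec_index y' s) = (\<Sum>r<d (h a). cnj (vec_index y r) * X $$ (r,s))" if "s < d (t a)" for s
        unfolding y'_def using that by (simp add: cnj_sum)
      have "ann (t a) y'" unfolding ann_def
      proof (intro ballI allI impI)
        fix \<gamma> k assume g: "\<gamma> \<in> paths_to Q0 Q1 h t (t a)" and k: "k < n (fst \<gamma>)"
        obtain j0 as where ga: "\<gamma> = (j0, as)" by (cases \<gamma>)
        have Bc: "Bm x \<gamma> \<in> carrier_mat (d (t a)) (n j0)" using Bm_carrier[OF x g] ga by simp
        note sn = Bm_snoc[OF x g[unfolded ga] a]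
        have "(\<Sum>s<d (t a). cnj (vec_index y' s) * Bm x \<gamma> $$ (s,k))
            = (\<Sum>s<d (t a). \<Sum>r<d (h a). cnj (vec_index y r) * X $$ (r,s) * Bm x \<gamma> $$ (s,k))"
          by (rule sum.cong[OF refl]) (simp add: cy' sum_distrib_right)
        also have "\<dots> = (\<Sum>r<d (h a). cnj (vec_index y r) * (\<Sum>s<d (t a). X $$ (r,s) * Bm x \<gamma> $$ (s,k)))"
          by (subst sum.swap) (simp add: sum_distrib_left mult.assoc)
        also have "\<dots> = (\<Sum>r<d (h a). cnj (vec_index y r) * Bm x (j0, as @ [a]) $$ (r,k))"
          using k ga Xc Bc unfolding sn(2) X_def[symmetric]
          using mult_entry[OF Xc Bc[unfolded ga]] by (intro sum.cong refl) (simp del: index_mult_mat)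
        also have "\<dots> = 0" using y(2) sn(1) k ga unfolding ann_def by auto
        finally show "(\<Sum>s<d (t a). cnj (vec_index y' s) * Bm x \<gamma> $$ (s,k)) = 0" .
      qed
      then have "(\<Sum>s<d (t a). cnj (vec_index y' s) * vec_index u s) = 0" using u y'c unfolding U_def by auto
      moreover have "(\<Sum>r<d (h a). cnj (vec_index y r) * vec_index (X *\<^sub>v u) r) = (\<Sum>s<d (t a). cnj (vec_index y' s) * vec_index u s)"
      proof -
        have "(\<Sum>r<d (h a). cnj (vec_index y r) * vec_index (X *\<^sub>v u) r) = (\<Sum>r<d (h a). \<Sum>s<d (t a). cnj (vec_index y r) * X $$ (r,s) * vec_index u s)"
          by (rule sum.cong[OF refl]) (simp add: mult_vec_entry[OF Xc uc] sum_distrib_left mult.assoc)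
        also have "\<dots> = (\<Sum>s<d (t a). cnj (vec_index y' s) * vec_index u s)"
          by (subst sum.swap) (simp add: cy' sum_distrib_right)
        finally show ?thesis .
      qed
      ultimately show ?thesis by simp
    qed
    then show "fst x a *\<^sub>v u \<in> U (h a)" unfolding U_def X_def[symmetric] using Xc uc by auto
  qed
  have img: "\<forall>i\<in>Q0. \<forall>w\<in>carrier_vec (n i). snd x i *\<^sub>v w \<in> U i"
  proof (intro ballI)
    fix i and ww :: "complex vec" assume i: "i \<in> Q0" and wc: "ww \<in> carrier_vec (n i)"
    define E where "E = snd x i"
    have Ec: "E \<in> carrier_mat (d i) (n i)" unfolding E_def using wfE[OF x i] .
    have "(\<Sum>r<d i. cnj (vec_index y r) * vec_index (E *\<^sub>v ww) r) = 0" if y: "y \<in> carrier_vec (d i)" "ann i y" for y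
    proof -
      have z: "(\<Sum>r<d i. cnj (vec_index y r) * E $$ (r,k)) = 0" if k: "k < n i" for k
        using y(2) Bm_triv[OF x i] k unfolding ann_def E_def by fastforce
      have "(\<Sum>r<d i. cnj (vec_index y r) * vec_index (E *\<^sub>v ww) r) = (\<Sum>r<d i. \<Sum>k<n i. cnj (vec_index y r) * E $$ (r,k) * vec_index ww k)"
        by (rule sum.cong[OF refl]) (simp add: mult_vec_entry[OF Ec wc] sum_distrib_left mult.assoc)
      also have "\<dots> = (\<Sum>k<n i. (\<Sum>r<d i. cnj (vec_index y r) * E $$ (r,k)) * vec_index ww k)"
        by (subst sum.swap) (simp add: sum_distrib_right)
      also have "\<dots> = 0" using z by simp
      finally show ?thesis .
    qed
    then show "snd x i *\<^sub>v ww \<in> U i" unfolding U_def E_def[symmetric] using Ec wc by auto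
  qed
  have "\<not> (\<exists>i\<in>Q0. U i \<noteq> carrier_vec (d i))"
    using st sub arr img unfolding stable_def by blast
  then have Uj: "U j = carrier_vec (d j)" using j by blast
  define y where "y = vec (d j) (\<lambda>s. cnj (w s))"
  have yc: "y \<in> carrier_vec (d j)" unfolding y_def by simp
  have "ann j y" unfolding ann_def y_def using w by simp
  then have "(\<Sum>s<d j. cnj (vec_index y s) * vec_index y s) = 0" using yc Uj unfolding U_def by blast
  then have "(\<Sum>s<d j. w s * cnj (w s)) = 0" unfolding y_def by simp
  then show ?thesis by (rule sum_sq_zero)
qed

end


lemma detf_deriv:
  assumes "\<forall>r<n. \<forall>c<n. ((\<lambda>z. M z r c) has_field_derivative M1 r c) (at z0)"
  shows "((\<lambda>z. detf n (M z)) has_field_derivative Dv n (M z0) M1) (at z0)"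
proof -
  let ?P = "{p. p permutes {0..<n}}"
  have "((\<lambda>z. detf n (M z)) has_field_derivative
      (\<Sum>p\<in>?P. of_int (sign p) * (\<Sum>r\<in>{0..<n}. M1 r (p r) * (\<Prod>i\<in>{0..<n}-{r}. M z0 i (p i))))) (at z0)"
    unfolding detf_def
  proof (intro DERIV_sum DERIV_cmult has_field_derivative_prod)
    fix p r assume "p \<in> ?P" "r \<in> {0..<n}"
    then show "((\<lambda>z. M z r (p r)) has_field_derivative M1 r (p r)) (at z0)"
      using assms permutes_in_image[of p "{0..<n}" r] by auto
  qed
  also have "(\<Sum>p\<in>?P. of_int (sign p) * (\<Sum>r\<in>{0..<n}. M1 r (p r) * (\<Prod>i\<in>{0..<n}-{r}. M z0 i (p i))))
     = Dv n (M z0) M1"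
    unfolding Dv_def detf_def
    by (subst sum.swap) (auto simp: prod_row sum_distrib_left lessThan_atLeast0 intro!: sum.cong)
  finally show ?thesis .
qed

lemma detf_holo:
  assumes "\<forall>r<n. \<forall>c<n. (\<lambda>z. M z r c) holomorphic_on UNIV"
  shows "(\<lambda>z. detf n (M z)) holomorphic_on UNIV"
  unfolding detf_def
proof (intro holomorphic_on_sum holomorphic_on_mult holomorphic_on_const holomorphic_on_prod)
  fix p r assume "p \<in> {p. p permutes {0..<n}}" "r \<in> {0..<n}"
  then show "(\<lambda>z. M z r (p r)) holomorphic_on UNIV"
    using assms permutes_in_image[of p "{0..<n}" r] by auto
qed


lemma mentry:
  assumes "A \<in> carrier_mat nr m" "B \<in> carrier_mat m nc" "r < nr" "c < nc"
  shows "(A * B) $$ (r, c) = (\<Sum>s<m. A $$ (r, s) * B $$ (s, c))"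
  using assms by (simp add: scalar_prod_def atLeast0LessThan)

definition HM :: "(complex \<Rightarrow> complex mat) \<Rightarrow> nat \<Rightarrow> nat \<Rightarrow> bool" where
  "HM F nr nc \<longleftrightarrow> (\<forall>z. F z \<in> carrier_mat nr nc) \<and> (\<forall>r<nr. \<forall>c<nc. (\<lambda>z. F z $$ (r,c)) holomorphic_on UNIV)"

lemma HM_mult:
  assumes A: "HM A nr m" and B: "HM B m nc"
  shows "HM (\<lambda>z. A z * B z) nr nc"
proof -
  have Ac: "A z \<in> carrier_mat nr m" and Bc: "B z \<in> carrier_mat m nc" for z
    using A B unfolding HM_def by auto
  have "(\<lambda>z. (A z * B z) $$ (r,c)) holomorphic_on UNIV" if "r < nr" "c < nc" for r c
  proof -
    have "(\<lambda>z. (A z * B z) $$ (r,c)) = (\<lambda>z. \<Sum>s<m. A z $$ (r,s) * B z $$ (s,c))"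
      using mentry[OF Ac Bc that] by auto
    moreover have "(\<lambda>z. \<Sum>s<m. A z $$ (r,s) * B z $$ (s,c)) holomorphic_on UNIV"
      using A B that unfolding HM_def by (intro holomorphic_on_sum holomorphic_on_mult) auto
    ultimately show ?thesis by simp
  qed
  moreover have "A z * B z \<in> carrier_mat nr nc" for z using mult_carrier_mat[OF Ac Bc] .
  ultimately show ?thesis unfolding HM_def by auto
qed

lemma HM_affine:
  assumes "X \<in> carrier_mat nr nc" "Y \<in> carrier_mat nr nc"
  shows "HM (\<lambda>z. X + z \<cdot>\<^sub>m Y) nr nc"
  unfolding HM_def using assms
  by (auto intro!: holomorphic_intros)

lemma HM_const:
  assumes "X \<in> carrier_mat nr nc"
  shows "HM (\<lambda>z. X) nr nc"
  unfolding HM_def using assms by auto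

definition DM :: "(complex \<Rightarrow> complex mat) \<Rightarrow> complex mat \<Rightarrow> nat \<Rightarrow> nat \<Rightarrow> bool" where
  "DM F F1 nr nc \<longleftrightarrow> (\<forall>z. F z \<in> carrier_mat nr nc) \<and> F1 \<in> carrier_mat nr nc \<and>
      (\<forall>r<nr. \<forall>c<nc. ((\<lambda>z. F z $$ (r,c)) has_field_derivative F1 $$ (r,c)) (at 0))"

definition dmat :: "(complex \<Rightarrow> complex mat) \<Rightarrow> nat \<Rightarrow> nat \<Rightarrow> complex mat" where
  "dmat F nr nc = mat nr nc (\<lambda>(r,c). deriv (\<lambda>z. F z $$ (r,c)) 0)"

lemma HM_DM: "HM F nr nc \<Longrightarrow> DM F (dmat F nr nc) nr nc"
  unfolding HM_def DM_def dmat_def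
  by (auto intro: holomorphic_derivI)

lemma DM_unique: "DM F F1 nr nc \<Longrightarrow> DM F F2 nr nc \<Longrightarrow> F1 = F2"
  unfolding DM_def by (auto intro!: eq_matI) (meson DERIV_unique)

lemma DM_mult:
  assumes A: "DM A A1 nr m" and B: "DM B B1 m nc"
  shows "DM (\<lambda>z. A z * B z) (A 0 * B1 + A1 * B 0) nr nc"
proof -
  have Ac: "A z \<in> carrier_mat nr m" and Bc: "B z \<in> carrier_mat m nc" for z
    using A B unfolding DM_def by auto
  have A1c: "A1 \<in> carrier_mat nr m" and B1c: "B1 \<in> carrier_mat m nc"
    using A B unfolding DM_def by auto
  have "((\<lambda>z. (A z * B z) $$ (r,c)) has_field_derivative (A 0 * B1 + A1 * B 0) $$ (r,c)) (at 0)"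
    if rc: "r < nr" "c < nc" for r c
  proof -
    have "(\<lambda>z. (A z * B z) $$ (r,c)) = (\<lambda>z. \<Sum>s<m. A z $$ (r,s) * B z $$ (s,c))"
      using mentry[OF Ac Bc rc] by auto
    moreover have "(A 0 * B1 + A1 * B 0) $$ (r,c) = (\<Sum>s<m. A 0 $$ (r,s) * B1 $$ (s,c) + A1 $$ (r,s) * B 0 $$ (s,c))"
    proof -
      have "(A 0 * B1 + A1 * B 0) $$ (r,c) = (A 0 * B1) $$ (r,c) + (A1 * B 0) $$ (r,c)"
        using rc A1c Bc[of 0] by (intro index_add_mat(1)) auto
      then show ?thesis using mentry[OF Ac B1c rc] mentry[OF A1c Bc rc] by (simp add: sum.distrib del: index_mult_mat)
    qed
    moreover have "((\<lambda>z. \<Sum>s<m. A z $$ (r,s) * B z $$ (s,c)) has_field_derivative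
        (\<Sum>s<m. A 0 $$ (r,s) * B1 $$ (s,c) + A1 $$ (r,s) * B 0 $$ (s,c))) (at 0)"
    proof (intro DERIV_sum)
      fix s assume "s \<in> {..<m}"
      then have s: "s < m" by simp
      have "((\<lambda>z. A z $$ (r,s)) has_field_derivative A1 $$ (r,s)) (at 0)"
        using A rc s unfolding DM_def by auto
      moreover have "((\<lambda>z. B z $$ (s,c)) has_field_derivative B1 $$ (s,c)) (at 0)"
        using B rc s unfolding DM_def by auto
      ultimately show "((\<lambda>z. A z $$ (r,s) * B z $$ (s,c)) has_field_derivative
          A 0 $$ (r,s) * B1 $$ (s,c) + A1 $$ (r,s) * B 0 $$ (s,c)) (at 0)"
        by (rule DERIV_mult')
    qed
    ultimately show ?thesis by simp
  qed
  moreover have "A 0 * B1 + A1 * B 0 \<in> carrier_mat nr nc" using Ac Bc A1c B1c by auto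
  moreover have "A z * B z \<in> carrier_mat nr nc" for z using mult_carrier_mat[OF Ac Bc] .
  ultimately show ?thesis unfolding DM_def by auto
qed

lemma DM_affine:
  assumes "X \<in> carrier_mat nr nc" "Y \<in> carrier_mat nr nc"
  shows "DM (\<lambda>z. X + z \<cdot>\<^sub>m Y) Y nr nc"
  unfolding DM_def using assms
  by (auto intro!: derivative_eq_intros)

context quiv begin

definition Col :: "'v \<Rightarrow> (('v \<times> 'e list) \<times> nat) set" where
  "Col i = Sigma (paths_to Q0 Q1 h t i) (\<lambda>\<gamma>. {..<n (fst \<gamma>)})"

definition av :: "('v,'e) qpoint \<Rightarrow> nat \<Rightarrow> ('v \<times> 'e list) \<times> nat \<Rightarrow> complex" where
  "av y r m = Bm y (fst m) $$ (r, snd m)"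

lemma finite_Col: "finite (Col i)"
  unfolding Col_def using finite_paths by auto

lemma rhorho_eq: "rhorho Q0 Q1 h t n d i y = mat (d i) (d i) (\<lambda>(r,c). \<Sum>m\<in>Col i. av y r m * cnj (av y c m))"
proof -
  have "(\<Sum>(j, as) \<in> paths_to Q0 Q1 h t i.
        let B = path_mat h d (fst y) j as * snd y j in
        \<Sum>k < n j. B $$ (r, k) * cnj (B $$ (c, k)))
      = (\<Sum>\<gamma> \<in> paths_to Q0 Q1 h t i. \<Sum>k < n (fst \<gamma>). av y r (\<gamma>,k) * cnj (av y c (\<gamma>,k)))" for r c
    by (rule sum.cong[OF refl]) (auto simp: av_def Bm_def Let_def split: prod.split)
  also have "\<dots> r c = (\<Sum>m\<in>Col i. av y r m * cnj (av y c m))" for r c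
    unfolding Col_def using finite_paths by (subst sum.Sigma) (auto simp: case_prod_beta)
  finally show ?thesis unfolding rhorho_def by simp
qed

lemma det_rhorho:
  "det (rhorho Q0 Q1 h t n d i y) = of_real ((1 / fact (d i)) * (\<Sum>f\<in>PiE {0..<d i} (\<lambda>_. Col i). (cmod (minor (d i) (av y) f))\<^sup>2))"
proof -
  have "of_nat (fact (d i)) * det (rhorho Q0 Q1 h t n d i y)
     = (\<Sum>f\<in>PiE {0..<d i} (\<lambda>_. Col i). minor (d i) (av y) f * cnj (minor (d i) (av y) f))"
    unfolding rhorho_eq det_detf by (rule cb[OF finite_Col])
  also have "\<dots> = of_real (\<Sum>f\<in>PiE {0..<d i} (\<lambda>_. Col i). (cmod (minor (d i) (av y) f))\<^sup>2)"
    by (simp only: of_real_sum of_real_power cmod_sq_eq)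
  finally show ?thesis
    by (simp add: field_simps) 
qed

lemma logdet_eq:
  "logdet Q0 Q1 h t n d i y = ln ((1 / fact (d i)) * (\<Sum>f\<in>PiE {0..<d i} (\<lambda>_. Col i). (cmod (minor (d i) (av y) f))\<^sup>2))"
  by (simp only: logdet_def det_rhorho Re_complex_of_real)

end


lemma add_zero_smult: "(A :: complex mat) \<in> carrier_mat nr nc \<Longrightarrow> B \<in> carrier_mat nr nc \<Longrightarrow> A + 0 \<cdot>\<^sub>m B = A"
  by (intro eq_matI) auto

context quiv begin

lemma fst_padd: "fst (padd x z v) a = fst x a + z \<cdot>\<^sub>m fst v a"
  and snd_padd: "snd (padd x z v) i = snd x i + z \<cdot>\<^sub>m snd v i"
  unfolding padd_def by auto

lemma wf_padd:
  assumes x: "wf_point Q0 Q1 h t n d x" and v: "wf_point Q0 Q1 h t n d v"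
  shows "wf_point Q0 Q1 h t n d (padd x z v)"
  using x v unfolding wf_point_def fst_padd snd_padd by auto

context
  fixes x v
  assumes x: "wf_point Q0 Q1 h t n d x" and v: "wf_point Q0 Q1 h t n d v"
begin

lemma Bm_padd0:
  assumes g: "\<gamma> \<in> paths_to Q0 Q1 h t i"
  shows "Bm (padd x 0 v) \<gamma> = Bm x \<gamma>"
proof -
  obtain j as where ga: "\<gamma> = (j, as)" by (cases \<gamma>)
  have j: "j \<in> Q0" and as: "set as \<subseteq> Q1" using g unfolding ga paths_to_iff by auto
  have e: "fst (padd x 0 v) a = fst x a" if "a \<in> Q1" for a
    unfolding fst_padd using wfV[OF x] wfV[OF v] that by (intro add_zero_smult) auto
  have "path_mat h d (fst (padd x 0 v)) j as = path_mat h d (fst x) j as"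
    by (rule path_mat_cong) (use as e in auto)
  moreover have "snd (padd x 0 v) j = snd x j"
    unfolding snd_padd using wfE[OF x j] wfE[OF v j] by (rule add_zero_smult)
  ultimately show ?thesis unfolding Bm_def ga by simp
qed

lemma path_HM:
  "j \<in> Q0 \<Longrightarrow> set as \<subseteq> Q1 \<Longrightarrow> is_path h t j as \<Longrightarrow>
    HM (\<lambda>z. path_mat h d (fst (padd x z v)) j as) (d (path_end h j as)) (d j)"
proof (induction as arbitrary: j)
  case Nil
  then show ?case by (simp add: HM_const)
next
  case (Cons a as)
  have a: "a \<in> Q1" and ta: "t a = j" and ha: "h a \<in> Q0" using Cons.prems ht by auto
  have "HM (\<lambda>z. path_mat h d (fst (padd x z v)) (h a) as * (fst x a + z \<cdot>\<^sub>m fst v a)) (d (path_end h (h a) as)) (d j)"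
    by (rule HM_mult[OF Cons.IH HM_affine]) (use Cons.prems ha a ta wfV[OF x] wfV[OF v] in auto)
  moreover have "(\<lambda>z. path_mat h d (fst (padd x z v)) (h a) as * fst (padd x z v) a)
     = (\<lambda>z. path_mat h d (fst (padd x z v)) (h a) as * (fst x a + z \<cdot>\<^sub>m fst v a))"
    by (intro ext) (simp only: fst_padd)
  ultimately show ?case using ta by simp
qed

lemma Bm_HM:
  assumes g: "\<gamma> \<in> paths_to Q0 Q1 h t i"
  shows "HM (\<lambda>z. Bm (padd x z v) \<gamma>) (d i) (n (fst \<gamma>))"
proof -
  obtain j as where ga: "\<gamma> = (j, as)" by (cases \<gamma>)
  have j: "j \<in> Q0" and as: "set as \<subseteq> Q1" "is_path h t j as" "path_end h j as = i"
    using g unfolding ga paths_to_iff by auto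
  have "HM (\<lambda>z. path_mat h d (fst (padd x z v)) j as * (snd x j + z \<cdot>\<^sub>m snd v j)) (d i) (n j)"
    using HM_mult[OF path_HM[OF j as(1,2)] HM_affine[OF wfE[OF x j] wfE[OF v j]]] as(3) by simp
  then show ?thesis unfolding Bm_def ga by (simp add: snd_padd)
qed

lemma Col_fst: "m \<in> Col i \<Longrightarrow> fst m \<in> paths_to Q0 Q1 h t i \<and> snd m < n (fst (fst m))"
  by (cases m) (auto simp: Col_def)

lemma av_padd0: "m \<in> Col i \<Longrightarrow> av (padd x 0 v) r m = av x r m"
  unfolding av_def using Bm_padd0 Col_fst by metis

lemma av_holo:
  assumes m: "m \<in> Col i" and r: "r < d i"
  shows "(\<lambda>z. av (padd x z v) r m) holomorphic_on UNIV"
proof -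
  have g: "fst m \<in> paths_to Q0 Q1 h t i" and k: "snd m < n (fst (fst m))"
    using m unfolding Col_def by auto
  show ?thesis unfolding av_def using Bm_HM[OF g] r k unfolding HM_def by auto
qed

lemma minor_holo:
  assumes f: "f \<in> PiE {0..<d i} (\<lambda>_. Col i)"
  shows "(\<lambda>z. minor (d i) (av (padd x z v)) f) holomorphic_on UNIV"
  unfolding minor_def
  by (rule detf_holo) (use f in \<open>auto intro!: av_holo simp: PiE_def Pi_def\<close>)

definition Bd :: "'v \<Rightarrow> 'v \<times> 'e list \<Rightarrow> complex mat" where
  "Bd i \<gamma> = dmat (\<lambda>z. Bm (padd x z v) \<gamma>) (d i) (n (fst \<gamma>))"

lemma Bd_DM:
  assumes g: "\<gamma> \<in> paths_to Q0 Q1 h t i"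
  shows "DM (\<lambda>z. Bm (padd x z v) \<gamma>) (Bd i \<gamma>) (d i) (n (fst \<gamma>))"
  unfolding Bd_def by (rule HM_DM[OF Bm_HM[OF g]])

lemma Bd_triv:
  assumes i: "i \<in> Q0"
  shows "Bd i (i, []) = snd v i"
proof -
  have "(\<lambda>z. Bm (padd x z v) (i, [])) = (\<lambda>z. snd x i + z \<cdot>\<^sub>m snd v i)"
    using Bm_triv(2)[OF wf_padd[OF x v] i] by (simp add: snd_padd)
  then have "DM (\<lambda>z. Bm (padd x z v) (i, [])) (snd v i) (d i) (n i)"
    using DM_affine[OF wfE[OF x i] wfE[OF v i]] by simp
  with Bd_DM[OF Bm_triv(1)[OF x i]] show ?thesis using DM_unique by auto
qed

lemma Bd_snoc:
  assumes g: "(j, as) \<in> paths_to Q0 Q1 h t (t a)" and a: "a \<in> Q1"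
  shows "Bd (h a) (j, as @ [a]) = fst x a * Bd (t a) (j, as) + fst v a * Bm x (j, as)"
proof -
  have "(\<lambda>z. Bm (padd x z v) (j, as @ [a])) = (\<lambda>z. (fst x a + z \<cdot>\<^sub>m fst v a) * Bm (padd x z v) (j, as))"
    using Bm_snoc(2)[OF wf_padd[OF x v] g a] by (simp add: fst_padd)
  moreover have "DM (\<lambda>z. (fst x a + z \<cdot>\<^sub>m fst v a) * Bm (padd x z v) (j, as))
      ((fst x a + 0 \<cdot>\<^sub>m fst v a) * Bd (t a) (j, as) + fst v a * Bm (padd x 0 v) (j, as)) (d (h a)) (n j)"
    using DM_mult[OF DM_affine Bd_DM[OF g]] wfV[OF x] wfV[OF v] a by auto
  ultimately have "DM (\<lambda>z. Bm (padd x z v) (j, as @ [a]))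
      (fst x a * Bd (t a) (j, as) + fst v a * Bm x (j, as)) (d (h a)) (n j)"
    using Bm_padd0[OF g] add_zero_smult[of "fst x a" "d (h a)" "d (t a)" "fst v a"] wfV[OF x] wfV[OF v] a by auto
  with Bd_DM[OF Bm_snoc(1)[OF x g a]] show ?thesis using DM_unique by fastforce
qed

lemma av_deriv:
  assumes m: "m \<in> Col i" and r: "r < d i"
  shows "((\<lambda>z. av (padd x z v) r m) has_field_derivative Bd i (fst m) $$ (r, snd m)) (at 0)"
proof -
  have g: "fst m \<in> paths_to Q0 Q1 h t i" and k: "snd m < n (fst (fst m))"
    using m unfolding Col_def by auto
  show ?thesis unfolding av_def using Bd_DM[OF g] r k unfolding DM_def by auto
qed

lemma minor_deriv:
  assumes f: "f \<in> PiE {0..<d i} (\<lambda>_. Col i)"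
  shows "deriv (\<lambda>z. minor (d i) (av (padd x z v)) f) 0
     = Dv (d i) (\<lambda>r s. av x r (f s)) (\<lambda>r s. Bd i (fst (f s)) $$ (r, snd (f s)))"
proof -
  have fs: "f s \<in> Col i" if "s < d i" for s using f that by (auto simp: PiE_def Pi_def)
  have "((\<lambda>z. minor (d i) (av (padd x z v)) f) has_field_derivative
      Dv (d i) (\<lambda>r s. av (padd x 0 v) r (f s)) (\<lambda>r s. Bd i (fst (f s)) $$ (r, snd (f s)))) (at 0)"
    unfolding minor_def by (rule detf_deriv) (use av_deriv fs in auto)
  moreover have "Dv (d i) (\<lambda>r s. av (padd x 0 v) r (f s)) (\<lambda>r s. Bd i (fst (f s)) $$ (r, snd (f s)))
     = Dv (d i) (\<lambda>r s. av x r (f s)) (\<lambda>r s. Bd i (fst (f s)) $$ (r, snd (f s)))"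
    by (rule Dv_cong) (auto intro!: av_padd0 fs)
  ultimately show ?thesis by (simp add: DERIV_imp_deriv)
qed

lemma minor_at0:
  assumes f: "f \<in> PiE {0..<d i} (\<lambda>_. Col i)"
  shows "minor (d i) (av (padd x 0 v)) f = minor (d i) (av x) f"
proof -
  have fs: "f s \<in> Col i" if "s < d i" for s using f that by (auto simp: PiE_def Pi_def)
  show ?thesis unfolding minor_def
    by (rule detf_cong) (auto intro!: av_padd0 fs)
qed

end
end


lemma juggle:
  fixes G V K G' B :: "complex mat"
  assumes "G \<in> carrier_mat a a" "V \<in> carrier_mat a b" "K \<in> carrier_mat b b" "G' \<in> carrier_mat b b"
    "B \<in> carrier_mat b c" "K * G' = 1\<^sub>m b"
  shows "(G * V * K) * (G' * B) = G * (V * B)"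
proof -
  have "(G * V * K) * (G' * B) = (G * V) * (K * (G' * B))"
    using assms by (intro assoc_mult_mat[of _ a b _ b _ c]) auto
  also have "K * (G' * B) = (K * G') * B"
    using assms by (intro assoc_mult_mat[of _ b b _ b _ c, symmetric]) auto
  also have "\<dots> = B" using assms by (simp add: left_mult_one_mat)
  also have "(G * V) * B = G * (V * B)"
    using assms by (intro assoc_mult_mat[of _ a a _ b _ c]) auto
  finally show ?thesis .
qed

lemma gl_line_fst:
  fixes G X W K :: "complex mat"
  assumes "G \<in> carrier_mat a a" "X \<in> carrier_mat a b" "W \<in> carrier_mat a b" "K \<in> carrier_mat b b"
  shows "G * X * K + z \<cdot>\<^sub>m (G * W * K) = G * (X + z \<cdot>\<^sub>m W) * K"
proof -
  have "G * (X + z \<cdot>\<^sub>m W) = G * X + G * (z \<cdot>\<^sub>m W)"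
    using assms by (intro mult_add_distrib_mat) auto
  moreover have "G * (z \<cdot>\<^sub>m W) = z \<cdot>\<^sub>m (G * W)"
    using assms by (intro mult_smult_distrib) auto
  ultimately have "G * (X + z \<cdot>\<^sub>m W) = G * X + z \<cdot>\<^sub>m (G * W)" by simp
  moreover have "(G * X + z \<cdot>\<^sub>m (G * W)) * K = G * X * K + (z \<cdot>\<^sub>m (G * W)) * K"
    using assms by (intro add_mult_distrib_mat[of _ a b]) auto
  moreover have "(z \<cdot>\<^sub>m (G * W)) * K = z \<cdot>\<^sub>m (G * W * K)"
    using assms by (intro mult_smult_assoc_mat[of _ a b]) auto
  ultimately show ?thesis by simp
qed

lemma gl_line_snd:
  fixes G E F :: "complex mat"
  assumes "G \<in> carrier_mat a a" "E \<in> carrier_mat a b" "F \<in> carrier_mat a b"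
  shows "G * E + z \<cdot>\<^sub>m (G * F) = G * (E + z \<cdot>\<^sub>m F)"
proof -
  have "G * (E + z \<cdot>\<^sub>m F) = G * E + G * (z \<cdot>\<^sub>m F)"
    using assms by (intro mult_add_distrib_mat) auto
  moreover have "G * (z \<cdot>\<^sub>m F) = z \<cdot>\<^sub>m (G * F)"
    using assms by (intro mult_smult_distrib) auto
  ultimately show ?thesis by simp
qed

context quiv begin

lemma paths_snoc_iff: "(j, as @ [a]) \<in> paths_to Q0 Q1 h t i \<longleftrightarrow> (j, as) \<in> paths_to Q0 Q1 h t (t a) \<and> a \<in> Q1 \<and> h a = i"
  unfolding paths_to_iff by (auto simp: is_path_append path_end_append)

lemma isGL_D:
  assumes "is_GL Q0 d g k" "i \<in> Q0"
  shows "g i \<in> carrier_mat (d i) (d i)" "k i \<in> carrier_mat (d i) (d i)" "g i * k i = 1\<^sub>m (d i)" "k i * g i = 1\<^sub>m (d i)"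
  using assms unfolding is_GL_def by auto

lemma Bm_gl:
  assumes y: "wf_point Q0 Q1 h t n d y" and y': "wf_point Q0 Q1 h t n d y'" and GL: "is_GL Q0 d g k"
    and V: "\<forall>a\<in>Q1. fst y' a = g (h a) * fst y a * k (t a)"
    and E: "\<forall>j\<in>Q0. snd y' j = g j * snd y j"
  shows "(j, as) \<in> paths_to Q0 Q1 h t i \<Longrightarrow> Bm y' (j, as) = g i * Bm y (j, as)"
proof (induction as arbitrary: i rule: rev_induct)
  case Nil
  then have "j = i" "i \<in> Q0" unfolding paths_to_iff by auto
  then show ?case using Bm_triv(2)[OF y] Bm_triv(2)[OF y'] E by auto
next
  case (snoc a as)
  then have g: "(j, as) \<in> paths_to Q0 Q1 h t (t a)" and a: "a \<in> Q1" and i: "i = h a"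
    unfolding paths_snoc_iff by auto
  have ta: "t a \<in> Q0" and ha: "h a \<in> Q0" using ht a by auto
  have "Bm y' (j, as @ [a]) = fst y' a * Bm y' (j, as)" by (rule Bm_snoc(2)[OF y' g a])
  also have "\<dots> = (g (h a) * fst y a * k (t a)) * (g (t a) * Bm y (j, as))"
    using V a snoc.IH[OF g] by simp
  also have "\<dots> = g (h a) * (fst y a * Bm y (j, as))"
    by (rule juggle) (use isGL_D[OF GL ta] isGL_D[OF GL ha] wfV[OF y] a Bm_carrier[OF y g] in auto)
  also have "\<dots> = g (h a) * Bm y (j, as @ [a])" using Bm_snoc(2)[OF y g a] by simp
  finally show ?case using i by simp
qed

lemma wf_gl:
  assumes x: "wf_point Q0 Q1 h t n d x" and GL: "is_GL Q0 d g k"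
  shows "wf_point Q0 Q1 h t n d (gl_act h t g k x)"
  using x GL ht unfolding wf_point_def gl_act_def is_GL_def by (auto intro!: mult_carrier_mat)

lemma det_GL_nz:
  assumes GL: "is_GL Q0 d g k" and i: "i \<in> Q0"
  shows "det (g i) \<noteq> 0"
proof -
  have "det (g i) * det (k i) = 1"
    using det_mult[OF isGL_D(1,2)[OF GL i]] isGL_D(3)[OF GL i] by simp
  then show ?thesis by auto
qed

context
  fixes x v g k
  assumes x: "wf_point Q0 Q1 h t n d x" and v: "wf_point Q0 Q1 h t n d v" and GL: "is_GL Q0 d g k"
begin

lemma av_gl:
  assumes m: "m \<in> Col i" and r: "r < d i"
  shows "av (padd (gl_act h t g k x) z (gl_act h t g k v)) r m = (\<Sum>l<d i. g i $$ (r,l) * av (padd x z v) l m)"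
proof -
  let ?y = "padd x z v" and ?y' = "padd (gl_act h t g k x) z (gl_act h t g k v)"
  have y: "wf_point Q0 Q1 h t n d ?y" by (rule wf_padd[OF x v])
  have y': "wf_point Q0 Q1 h t n d ?y'" by (rule wf_padd[OF wf_gl[OF x GL] wf_gl[OF v GL]])
  have V: "\<forall>a\<in>Q1. fst ?y' a = g (h a) * fst ?y a * k (t a)"
  proof
    fix a assume a: "a \<in> Q1"
    then have ta: "t a \<in> Q0" and ha: "h a \<in> Q0" using ht by auto
    show "fst ?y' a = g (h a) * fst ?y a * k (t a)"
      unfolding fst_padd gl_act_def fst_conv
      by (rule gl_line_fst) (use isGL_D[OF GL ta] isGL_D[OF GL ha] wfV[OF x] wfV[OF v] a in auto)
  qed
  have E: "\<forall>j\<in>Q0. snd ?y' j = g j * snd ?y j"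
  proof
    fix j assume j: "j \<in> Q0"
    show "snd ?y' j = g j * snd ?y j"
      unfolding snd_padd gl_act_def snd_conv
      by (rule gl_line_snd) (use isGL_D[OF GL j] wfE[OF x j] wfE[OF v j] in auto)
  qed
  obtain j as kk where mm: "m = ((j, as), kk)" by (metis prod.collapse)
  have g: "(j, as) \<in> paths_to Q0 Q1 h t i" and kk: "kk < n j" using m unfolding mm Col_def by auto
  have i: "i \<in> Q0" using g path_end_in unfolding paths_to_iff by auto
  have "Bm ?y' (j, as) = g i * Bm ?y (j, as)" by (rule Bm_gl[OF y y' GL V E g])
  then show ?thesis unfolding av_def mm fst_conv snd_conv
    using mentry[OF isGL_D(1)[OF GL i] Bm_carrier[OF y g] r] kk by simp
qed

lemma minor_gl:
  assumes f: "f \<in> PiE {0..<d i} (\<lambda>_. Col i)" and i: "i \<in> Q0"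
  shows "minor (d i) (av (padd (gl_act h t g k x) z (gl_act h t g k v))) f = det (g i) * minor (d i) (av (padd x z v)) f"
proof -
  have fs: "f s \<in> Col i" if "s < d i" for s using f that by (auto simp: PiE_def Pi_def)
  let ?A = "mat (d i) (d i) (\<lambda>(r,s). av (padd x z v) r (f s))"
  have Ac: "?A \<in> carrier_mat (d i) (d i)" by simp
  have "minor (d i) (av (padd (gl_act h t g k x) z (gl_act h t g k v))) f
      = detf (d i) (\<lambda>r s. \<Sum>l<d i. g i $$ (r,l) * av (padd x z v) l (f s))"
    unfolding minor_def by (rule detf_cong) (auto intro!: av_gl fs)
  also have "\<dots> = det (g i * ?A)"
  proof -
    have gi: "g i \<in> carrier_mat (d i) (d i)" by (rule isGL_D(1)[OF GL i])
    have e: "(g i * ?A) $$ (r,s) = (\<Sum>l<d i. g i $$ (r,l) * av (padd x z v) l (f s))" if "r < d i" "s < d i" for r s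
      using mentry[OF gi Ac that] that by simp
    have "mat (d i) (d i) (\<lambda>(r,s). \<Sum>l<d i. g i $$ (r,l) * av (padd x z v) l (f s)) = g i * ?A"
      by (rule eq_matI) (use gi e in auto)
    then show ?thesis unfolding det_detf[symmetric] by simp
  qed
  also have "\<dots> = det (g i) * det ?A" by (rule det_mult[OF isGL_D(1)[OF GL i] Ac])
  finally show ?thesis unfolding minor_def det_detf .
qed

lemma logdet_gl:
  assumes i: "i \<in> Q0"
  shows "logdet Q0 Q1 h t n d i (padd (gl_act h t g k x) z (gl_act h t g k v))
    = ln ((cmod (det (g i)))\<^sup>2 / fact (d i) * (\<Sum>f\<in>PiE {0..<d i} (\<lambda>_. Col i). (cmod (minor (d i) (av (padd x z v)) f))\<^sup>2))"
  unfolding logdet_eq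
  by (simp add: minor_gl[OF _ i] norm_mult power_mult_distrib sum_distrib_left cong: sum.cong)

end
end


lemma sum_sq_zero_set:
  fixes w :: "'m \<Rightarrow> complex"
  assumes A: "finite A" and s: "(\<Sum>m\<in>A. w m * cnj (w m)) = 0"
  shows "\<forall>m\<in>A. w m = 0"
proof -
  have e: "of_real (\<Sum>m\<in>A. (cmod (w m))\<^sup>2) = (\<Sum>m\<in>A. w m * cnj (w m))"
    by (simp only: of_real_sum of_real_power cmod_sq_eq[symmetric])
  have "of_real (\<Sum>m\<in>A. (cmod (w m))\<^sup>2) = (0::complex)" unfolding e by (rule s)
  then have "(\<Sum>m\<in>A. (cmod (w m))\<^sup>2) = 0" by (simp only: of_real_eq_0_iff)
  then have "\<forall>m\<in>A. (cmod (w m))\<^sup>2 = 0" using A by (subst (asm) sum_nonneg_eq_0_iff) auto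
  then show ?thesis by simp
qed

context quiv begin

lemma det_rhorho_nz:
  assumes st: "stable Q0 Q1 h t n d x" and i: "i \<in> Q0"
  shows "det (rhorho Q0 Q1 h t n d i x) \<noteq> 0"
proof
  assume d0: "det (rhorho Q0 Q1 h t n d i x) = 0"
  define R where "R = rhorho Q0 Q1 h t n d i x"
  have R: "R = mat (d i) (d i) (\<lambda>(r,c). \<Sum>m\<in>Col i. av x r m * cnj (av x c m))"
    unfolding R_def by (rule rhorho_eq)
  have Rc: "R \<in> carrier_mat (d i) (d i)" unfolding R by simp
  obtain y where yc: "y \<in> carrier_vec (d i)" and y0: "y \<noteq> 0\<^sub>v (d i)" and Ry: "R *\<^sub>v y = 0\<^sub>v (d i)"
    using det_0_iff_vec_prod_zero[OF Rc] d0 unfolding R_def by auto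
  define w where "w m = (\<Sum>r<d i. cnj (vec_index y r) * av x r m)" for m
  have cw: "cnj (w m) = (\<Sum>c<d i. vec_index y c * cnj (av x c m))" for m
    unfolding w_def by (simp add: cnj_sum)
  have "(\<Sum>m\<in>Col i. w m * cnj (w m)) = (\<Sum>m\<in>Col i. \<Sum>r<d i. \<Sum>c<d i. cnj (vec_index y r) * (av x r m * cnj (av x c m) * vec_index y c))"
    unfolding cw unfolding w_def sum_product by (intro sum.cong refl) (simp add: algebra_simps)
  also have "\<dots> = (\<Sum>r<d i. \<Sum>c<d i. \<Sum>m\<in>Col i. cnj (vec_index y r) * (av x r m * cnj (av x c m) * vec_index y c))"
    by (subst sum.swap) (simp add: sum.swap[of _ "Col i"])
  also have "\<dots> = (\<Sum>r<d i. cnj (vec_index y r) * vec_index (R *\<^sub>v y) r)"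
  proof (rule sum.cong[OF refl])
    fix r assume r: "r \<in> {..<d i}"
    have "vec_index (R *\<^sub>v y) r = (\<Sum>c<d i. R $$ (r,c) * vec_index y c)"
      using mult_vec_entry[OF Rc yc] r by simp
    also have "\<dots> = (\<Sum>c<d i. (\<Sum>m\<in>Col i. av x r m * cnj (av x c m)) * vec_index y c)"
      using r unfolding R by simp
    finally show "(\<Sum>c<d i. \<Sum>m\<in>Col i. cnj (vec_index y r) * (av x r m * cnj (av x c m) * vec_index y c))
        = cnj (vec_index y r) * vec_index (R *\<^sub>v y) r"
      by (simp add: sum_distrib_left sum_distrib_right)
  qed
  also have "\<dots> = 0" unfolding Ry using yc by simp
  finally have "\<forall>m\<in>Col i. w m = 0" by (intro sum_sq_zero_set[OF finite_Col])
  then have "\<forall>\<gamma>\<in>paths_to Q0 Q1 h t i. \<forall>k<n (fst \<gamma>). (\<Sum>s<d i. cnj (vec_index y s) * Bm x \<gamma> $$ (s,k)) = 0"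
    unfolding w_def av_def Col_def by auto
  from span[OF st i this] have "\<forall>s<d i. vec_index y s = 0" by simp
  then have "y = 0\<^sub>v (d i)" using yc by (intro eq_vecI) auto
  with y0 show False by simp
qed


definition LV :: "('v,'e) qpoint \<Rightarrow> ('v,'e) qpoint \<Rightarrow> 'v \<Rightarrow> real" where
  "LV x v i = (Re (\<Sum>f\<in>PiE {0..<d i} (\<lambda>_. Col i). deriv (\<lambda>z. minor (d i) (av (padd x z v)) f) 0 * cnj (deriv (\<lambda>z. minor (d i) (av (padd x z v)) f) 0))
      * (\<Sum>f\<in>PiE {0..<d i} (\<lambda>_. Col i). (cmod (minor (d i) (av (padd x 0 v)) f))\<^sup>2)
     - (cmod (\<Sum>f\<in>PiE {0..<d i} (\<lambda>_. Col i). deriv (\<lambda>z. minor (d i) (av (padd x z v)) f) 0 * cnj (minor (d i) (av (padd x 0 v)) f)))\<^sup>2)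
     / ((\<Sum>f\<in>PiE {0..<d i} (\<lambda>_. Col i). (cmod (minor (d i) (av (padd x 0 v)) f))\<^sup>2) * (\<Sum>f\<in>PiE {0..<d i} (\<lambda>_. Col i). (cmod (minor (d i) (av (padd x 0 v)) f))\<^sup>2))"

lemma finite_Fi: "finite (PiE {0..<d i} (\<lambda>_. Col i))"
  using finite_Col by (simp add: finite_PiE)

context
  fixes x v
  assumes st: "stable Q0 Q1 h t n d x" and v: "wf_point Q0 Q1 h t n d v"
begin

lemma x: "wf_point Q0 Q1 h t n d x" using st unfolding stable_def by simp

lemma S_pos:
  assumes i: "i \<in> Q0"
  shows "(\<Sum>f\<in>PiE {0..<d i} (\<lambda>_. Col i). (cmod (minor (d i) (av (padd x 0 v)) f))\<^sup>2) > 0"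
proof -
  define S where "S = (\<Sum>f\<in>PiE {0..<d i} (\<lambda>_. Col i). (cmod (minor (d i) (av x) f))\<^sup>2)"
  have "(\<Sum>f\<in>PiE {0..<d i} (\<lambda>_. Col i). (cmod (minor (d i) (av (padd x 0 v)) f))\<^sup>2) = S"
    unfolding S_def by (rule sum.cong[OF refl]) (simp add: minor_at0[OF x v])
  moreover have "S \<noteq> 0" using det_rhorho_nz[OF st i] unfolding det_rhorho S_def[symmetric] by auto
  moreover have "S \<ge> 0" unfolding S_def by (rule sum_nonneg) simp
  ultimately show ?thesis by simp
qed

lemma vertex_D2:
  assumes i: "i \<in> Q0" and C: "C > 0"
    and F: "\<forall>z. F z = ln (C * (\<Sum>f\<in>PiE {0..<d i} (\<lambda>_. Col i). (cmod (minor (d i) (av (padd x z v)) f))\<^sup>2))"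
  shows "\<exists>w1 w2. D2 (\<lambda>s. F (of_real s)) w1 \<and> D2 (\<lambda>s. F (\<i> * of_real s)) w2 \<and> w1 + w2 = 4 * LV x v i"
proof -
  have hol: "\<forall>f\<in>PiE {0..<d i} (\<lambda>_. Col i). (\<lambda>z. minor (d i) (av (padd x z v)) f) holomorphic_on UNIV"
    using minor_holo[OF x v] by blast
  from levi_formula[OF finite_Fi hol C S_pos[OF i]]
  show ?thesis unfolding LV_def using F by simp
qed

lemma levi_vertex:
  assumes i: "i \<in> Q0"
  shows "levi (logdet Q0 Q1 h t n d i) x v = LV x v i"
proof -
  have C: "(1 / fact (d i) :: real) > 0" by simp
  obtain w1 w2 where w: "D2 (\<lambda>s. logdet Q0 Q1 h t n d i (padd x (of_real s) v)) w1"
     "D2 (\<lambda>s. logdet Q0 Q1 h t n d i (padd x (\<i> * of_real s) v)) w2" "w1 + w2 = 4 * LV x v i"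
    using vertex_D2[OF i C, of "\<lambda>z. logdet Q0 Q1 h t n d i (padd x z v)"] logdet_eq by auto
  show ?thesis unfolding levi_def using D2_deriv[OF w(1)] D2_deriv[OF w(2)] w(3) by simp
qed

lemma levi_vertex_gl:
  assumes i: "i \<in> Q0" and GL: "is_GL Q0 d g k"
  shows "levi (logdet Q0 Q1 h t n d i) (gl_act h t g k x) (gl_act h t g k v) = LV x v i"
proof -
  have C: "(cmod (det (g i)))\<^sup>2 / fact (d i) > 0" using det_GL_nz[OF GL i] by simp
  obtain w1 w2 where w: "D2 (\<lambda>s. logdet Q0 Q1 h t n d i (padd (gl_act h t g k x) (of_real s) (gl_act h t g k v))) w1"
     "D2 (\<lambda>s. logdet Q0 Q1 h t n d i (padd (gl_act h t g k x) (\<i> * of_real s) (gl_act h t g k v))) w2" "w1 + w2 = 4 * LV x v i"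
    using vertex_D2[OF i C, of "\<lambda>z. logdet Q0 Q1 h t n d i (padd (gl_act h t g k x) z (gl_act h t g k v))"]
      logdet_gl[OF x v GL i] by auto
  show ?thesis unfolding levi_def using D2_deriv[OF w(1)] D2_deriv[OF w(2)] w(3) by simp
qed

lemma LV_nonneg:
  assumes i: "i \<in> Q0"
  shows "LV x v i \<ge> 0"
  unfolding LV_def
  by (intro divide_nonneg_pos cauchy_schwarz S_pos[OF i] mult_pos_pos)

end
end


lemma add_eq_minus:
  fixes P Q R :: "complex mat"
  assumes "P \<in> carrier_mat a b" "Q \<in> carrier_mat a b" "R \<in> carrier_mat a b" "P + Q = R"
  shows "Q = R - P"
proof (rule eq_matI)
  fix i j assume ij: "i < dim_row (R - P)" "j < dim_col (R - P)"
  have "(P + Q) $$ (i,j) = R $$ (i,j)" using assms(4) by simp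
  then show "Q $$ (i,j) = (R - P) $$ (i,j)" using assms ij by auto
qed (use assms in auto)

lemma add_minus_cancel:
  fixes P R :: "complex mat"
  assumes "P \<in> carrier_mat a b" "R \<in> carrier_mat a b"
  shows "P + (R - P) = R"
  by (rule eq_matI) (use assms in auto)

context quiv begin

context
  fixes x v
  assumes st: "stable Q0 Q1 h t n d x" and v: "wf_point Q0 Q1 h t n d v"
begin

lemma xw: "wf_point Q0 Q1 h t n d x" using st unfolding stable_def by simp

lemma tangent_Bd:
  assumes xi: "\<forall>i\<in>Q0. xi i \<in> carrier_mat (d i) (d i)"
    and A: "\<forall>a\<in>Q1. fst v a = xi (h a) * fst x a - fst x a * xi (t a)"
    and E: "\<forall>i\<in>Q0. snd v i = xi i * snd x i"
  shows "(j, as) \<in> paths_to Q0 Q1 h t i \<Longrightarrow> Bd x v i (j, as) = xi i * Bm x (j, as)"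
proof (induction as arbitrary: i rule: rev_induct)
  case Nil
  then have "j = i" "i \<in> Q0" unfolding paths_to_iff by auto
  then show ?case using Bd_triv[OF xw v] Bm_triv(2)[OF xw] E by auto
next
  case (snoc a as)
  then have g: "(j, as) \<in> paths_to Q0 Q1 h t (t a)" and a: "a \<in> Q1" and i: "i = h a"
    unfolding paths_snoc_iff by auto
  have ta: "t a \<in> Q0" and ha: "h a \<in> Q0" using ht a by auto
  define X where "X = fst x a"
  define B where "B = Bm x (j, as)"
  have Xc: "X \<in> carrier_mat (d (h a)) (d (t a))" unfolding X_def using wfV[OF xw] a by auto
  have Bc: "B \<in> carrier_mat (d (t a)) (n j)" unfolding B_def using Bm_carrier[OF xw g] by simp
  have xh: "xi (h a) \<in> carrier_mat (d (h a)) (d (h a))" and xt: "xi (t a) \<in> carrier_mat (d (t a)) (d (t a))"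
    using xi ha ta by auto
  have "Bd x v (h a) (j, as @ [a]) = X * Bd x v (t a) (j, as) + fst v a * B"
    unfolding X_def B_def by (rule Bd_snoc[OF xw v g a])
  also have "\<dots> = X * (xi (t a) * B) + (xi (h a) * X - X * xi (t a)) * B"
    using snoc.IH[OF g] A a unfolding X_def B_def by simp
  also have "(xi (h a) * X - X * xi (t a)) * B = xi (h a) * (X * B) - X * (xi (t a) * B)"
  proof -
    have "(xi (h a) * X - X * xi (t a)) * B = xi (h a) * X * B - X * xi (t a) * B"
      using xh Xc xt Bc by (intro minus_mult_distrib_mat) auto
    also have "xi (h a) * X * B = xi (h a) * (X * B)" using xh Xc Bc by (intro assoc_mult_mat) auto
    also have "X * xi (t a) * B = X * (xi (t a) * B)" using Xc xt Bc by (intro assoc_mult_mat) auto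
    finally show ?thesis .
  qed
  also have "X * (xi (t a) * B) + (xi (h a) * (X * B) - X * (xi (t a) * B)) = xi (h a) * (X * B)"
    by (rule add_minus_cancel) (use Xc xt Bc xh in auto)
  also have "X * B = Bm x (j, as @ [a])" unfolding X_def B_def using Bm_snoc(2)[OF xw g a] by simp
  finally show ?case using i by simp
qed

lemma numer_zero_iff:
  assumes i: "i \<in> Q0"
  shows "LV x v i = 0 \<longleftrightarrow> (\<exists>l. \<forall>f\<in>PiE {0..<d i} (\<lambda>_. Col i).
      Dv (d i) (\<lambda>r s. av x r (f s)) (\<lambda>r s. Bd x v i (fst (f s)) $$ (r, snd (f s))) = l * minor (d i) (av x) f)"
proof -
  note S = S_pos[OF st v i]
  have "LV x v i = 0 \<longleftrightarrow> (\<exists>l. \<forall>f\<in>PiE {0..<d i} (\<lambda>_. Col i).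
      deriv (\<lambda>z. minor (d i) (av (padd x z v)) f) 0 = l * minor (d i) (av (padd x 0 v)) f)"
    unfolding LV_def using S cauchy_schwarz_zero[OF finite_Fi S] by simp
  also have "\<dots> \<longleftrightarrow> (\<exists>l. \<forall>f\<in>PiE {0..<d i} (\<lambda>_. Col i).
      Dv (d i) (\<lambda>r s. av x r (f s)) (\<lambda>r s. Bd x v i (fst (f s)) $$ (r, snd (f s))) = l * minor (d i) (av x) f)"
    using minor_deriv[OF xw v] minor_at0[OF xw v] by simp
  finally show ?thesis .
qed

end
end


context quiv begin

context
  fixes x v
  assumes st: "stable Q0 Q1 h t n d x" and v: "wf_point Q0 Q1 h t n d v"
begin

lemma xw': "wf_point Q0 Q1 h t n d x" using st unfolding stable_def by simp

lemma Bd_carrier: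
  assumes g: "\<gamma> \<in> paths_to Q0 Q1 h t i"
  shows "Bd x v i \<gamma> \<in> carrier_mat (d i) (n (fst \<gamma>))"
  using Bd_DM[OF xw' v g] unfolding DM_def by auto

lemma tangent_imp_zero:
  assumes T: "in_orbit_tangent Q0 Q1 h t d x v" and i: "i \<in> Q0"
  shows "LV x v i = 0"
proof -
  obtain xi where xi: "\<forall>i\<in>Q0. xi i \<in> carrier_mat (d i) (d i)"
    and A: "\<forall>a\<in>Q1. fst v a = xi (h a) * fst x a - fst x a * xi (t a)"
    and E: "\<forall>i\<in>Q0. snd v i = xi i * snd x i"
    using T unfolding in_orbit_tangent_def by blast
  have comb: "Bd x v i (fst m) $$ (r, snd m) = (\<Sum>l<d i. xi i $$ (r,l) * av x l m)"
    if m: "m \<in> Col i" and r: "r < d i" for r m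
  proof -
    have g: "fst m \<in> paths_to Q0 Q1 h t i" and k: "snd m < n (fst (fst m))" using Col_fst[OF xw' v m] by auto
    have "Bd x v i (fst m) = xi i * Bm x (fst m)"
      using tangent_Bd[OF st v xi A E, of "fst (fst m)" "snd (fst m)" i] g by simp
    then show ?thesis unfolding av_def
      using mentry[OF _ Bm_carrier[OF xw' g] r k, of "xi i"] xi i by simp
  qed
  have "\<forall>f\<in>PiE {0..<d i} (\<lambda>_. Col i).
      Dv (d i) (\<lambda>r s. av x r (f s)) (\<lambda>r s. Bd x v i (fst (f s)) $$ (r, snd (f s))) = (\<Sum>r<d i. xi i $$ (r,r)) * minor (d i) (av x) f"
  proof
    fix f assume f: "f \<in> PiE {0..<d i} (\<lambda>_. Col i)"
    have fs: "f s \<in> Col i" if "s < d i" for s using f that by (auto simp: PiE_def Pi_def)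
    show "Dv (d i) (\<lambda>r s. av x r (f s)) (\<lambda>r s. Bd x v i (fst (f s)) $$ (r, snd (f s))) = (\<Sum>r<d i. xi i $$ (r,r)) * minor (d i) (av x) f"
      unfolding minor_def by (rule Dv_comb) (use comb fs in auto)
  qed
  then show ?thesis unfolding numer_zero_iff[OF st v i] by (rule exI)
qed

lemma zero_imp_tangent:
  assumes Z: "\<forall>i\<in>Q0. LV x v i = 0"
  shows "in_orbit_tangent Q0 Q1 h t d x v"
proof -
  have "\<forall>i\<in>Q0. \<exists>\<xi>. \<forall>r<d i. \<forall>m\<in>Col i. Bd x v i (fst m) $$ (r, snd m) = (\<Sum>l<d i. \<xi> r l * av x l m)"
  proof
    fix i assume i: "i \<in> Q0"
    obtain l where l: "\<forall>f\<in>PiE {0..<d i} (\<lambda>_. Col i).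
      Dv (d i) (\<lambda>r s. av x r (f s)) (\<lambda>r s. Bd x v i (fst (f s)) $$ (r, snd (f s))) = l * minor (d i) (av x) f"
      using iffD1[OF numer_zero_iff[OF st v i]] Z i by blast
    have "\<exists>f0\<in>PiE {0..<d i} (\<lambda>_. Col i). minor (d i) (av x) f0 \<noteq> 0"
    proof (rule ccontr)
      assume "\<not> ?thesis"
      then have "(\<Sum>f\<in>PiE {0..<d i} (\<lambda>_. Col i). (cmod (minor (d i) (av (padd x 0 v)) f))\<^sup>2) = 0"
        using minor_at0[OF xw' v] by (intro sum.neutral) auto
      with S_pos[OF st v i] show False by simp
    qed
    then obtain f0 where f0: "f0 \<in> PiE {0..<d i} (\<lambda>_. Col i)" "minor (d i) (av x) f0 \<noteq> 0" by blast
    show "\<exists>\<xi>. \<forall>r<d i. \<forall>m\<in>Col i. Bd x v i (fst m) $$ (r, snd m) = (\<Sum>l<d i. \<xi> r l * av x l m)"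
      by (rule pluecker[OF finite_Col f0 l])
  qed
  note ex = this
  obtain \<xi> where \<xi>: "\<forall>i\<in>Q0. \<forall>r<d i. \<forall>m\<in>Col i. Bd x v i (fst m) $$ (r, snd m) = (\<Sum>l<d i. \<xi> i r l * av x l m)"
    using bchoice[OF ex] by blast
  define xi where "xi i = mat (d i) (d i) (\<lambda>(r,l). \<xi> i r l)" for i
  have xic: "xi i \<in> carrier_mat (d i) (d i)" for i unfolding xi_def by simp
  have BdM: "Bd x v i (j, as) = xi i * Bm x (j, as)" if i: "i \<in> Q0" and g: "(j, as) \<in> paths_to Q0 Q1 h t i" for i j as
  proof (rule eq_matI)
    have Bc: "Bm x (j, as) \<in> carrier_mat (d i) (n j)" using Bm_carrier[OF xw' g] by simp
    have Bdc: "Bd x v i (j, as) \<in> carrier_mat (d i) (n j)" using Bd_carrier[OF g] by simp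
    show "dim_row (Bd x v i (j, as)) = dim_row (xi i * Bm x (j, as))" using Bc Bdc xic[of i] by (simp add: carrier_matD)
    show "dim_col (Bd x v i (j, as)) = dim_col (xi i * Bm x (j, as))" using Bc Bdc xic[of i] by (simp add: carrier_matD)
    fix r k assume "r < dim_row (xi i * Bm x (j, as))" "k < dim_col (xi i * Bm x (j, as))"
    then have r: "r < d i" and k: "k < n j" using Bc xic[of i] by (auto simp: carrier_matD)
    have m: "((j, as), k) \<in> Col i" using g k unfolding Col_def by auto
    have "Bd x v i (j, as) $$ (r, k) = (\<Sum>l<d i. \<xi> i r l * av x l ((j, as), k))"
      using \<xi>[rule_format, OF i r m] by simp
    also have "\<dots> = (xi i * Bm x (j, as)) $$ (r, k)"
      using mentry[OF xic Bc r k] r unfolding xi_def av_def by simp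
    finally show "Bd x v i (j, as) $$ (r, k) = (xi i * Bm x (j, as)) $$ (r, k)" .
  qed
  have E: "\<forall>i\<in>Q0. snd v i = xi i * snd x i"
  proof
    fix i assume i: "i \<in> Q0"
    show "snd v i = xi i * snd x i"
      using BdM[OF i Bm_triv(1)[OF xw' i]] Bd_triv[OF xw' v i] Bm_triv(2)[OF xw' i] by simp
  qed
  have A: "\<forall>a\<in>Q1. fst v a = xi (h a) * fst x a - fst x a * xi (t a)"
  proof
    fix a assume a: "a \<in> Q1"
    have ta: "t a \<in> Q0" and ha: "h a \<in> Q0" using ht a by auto
    define X where "X = fst x a"
    define W where "W = fst v a"
    define T where "T = xi (h a) * X - X * xi (t a)"
    have Xc: "X \<in> carrier_mat (d (h a)) (d (t a))" unfolding X_def using wfV[OF xw'] a by auto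
    have Wc: "W \<in> carrier_mat (d (h a)) (d (t a))" unfolding W_def using wfV[OF v] a by auto
    have Tc: "T \<in> carrier_mat (d (h a)) (d (t a))" unfolding T_def using Xc xic
      by (intro minus_carrier_mat) (auto intro: mult_carrier_mat)
    have WB: "(W - T) * Bm x (j, as) = 0\<^sub>m (d (h a)) (n j)" if g: "(j, as) \<in> paths_to Q0 Q1 h t (t a)" for j as
    proof -
      define B where "B = Bm x (j, as)"
      have Bc: "B \<in> carrier_mat (d (t a)) (n j)" unfolding B_def using Bm_carrier[OF xw' g] by simp
      have g2: "(j, as @ [a]) \<in> paths_to Q0 Q1 h t (h a)" by (rule Bm_snoc(1)[OF xw' g a])
      have "X * (xi (t a) * B) + W * B = xi (h a) * (X * B)"
      proof -
        have "X * (xi (t a) * B) + W * B = Bd x v (h a) (j, as @ [a])"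
          using Bd_snoc[OF xw' v g a] BdM[OF ta g] unfolding X_def W_def B_def by simp
        also have "\<dots> = xi (h a) * Bm x (j, as @ [a])" by (rule BdM[OF ha g2])
        also have "Bm x (j, as @ [a]) = X * B" unfolding X_def B_def by (rule Bm_snoc(2)[OF xw' g a])
        finally show ?thesis .
      qed
      then have WBe: "W * B = xi (h a) * (X * B) - X * (xi (t a) * B)"
        by (intro add_eq_minus[of _ "d (h a)" "n j"]) (use Xc Wc Bc xic in \<open>auto intro: mult_carrier_mat\<close>)
      have TBe: "T * B = xi (h a) * (X * B) - X * (xi (t a) * B)"
      proof -
        have "T * B = xi (h a) * X * B - X * xi (t a) * B"
          unfolding T_def using xic[of "h a"] xic[of "t a"] Xc Bc
          by (intro minus_mult_distrib_mat[of _ "d (h a)" "d (t a)"]) (auto intro: mult_carrier_mat)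
        also have "xi (h a) * X * B = xi (h a) * (X * B)" using xic Xc Bc by (intro assoc_mult_mat) auto
        also have "X * xi (t a) * B = X * (xi (t a) * B)" using Xc xic Bc by (intro assoc_mult_mat) auto
        finally show ?thesis .
      qed
      have "(W - T) * B = W * B - T * B" using Wc Tc Bc by (intro minus_mult_distrib_mat) auto
      also have "\<dots> = 0\<^sub>m (d (h a)) (n j)" unfolding WBe TBe
        by (rule eq_matI) (use Xc Bc xic in auto)
      finally show ?thesis unfolding B_def .
    qed
    have "W = T"
    proof (rule eq_matI)
      show "dim_row W = dim_row T" "dim_col W = dim_col T" using Wc Tc by auto
      fix r s assume "r < dim_row T" "s < dim_col T"
      then have r: "r < d (h a)" and s: "s < d (t a)" using Tc by auto
      have "\<forall>\<gamma>\<in>paths_to Q0 Q1 h t (t a). \<forall>k<n (fst \<gamma>). (\<Sum>s<d (t a). (W - T) $$ (r, s) * Bm x \<gamma> $$ (s,k)) = 0"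
      proof (intro ballI allI impI)
        fix \<gamma> k assume g: "\<gamma> \<in> paths_to Q0 Q1 h t (t a)" and k: "k < n (fst \<gamma>)"
        obtain j as where ga: "\<gamma> = (j, as)" by (cases \<gamma>)
        have Bc: "Bm x (j, as) \<in> carrier_mat (d (t a)) (n j)" using Bm_carrier[OF xw' g] ga by simp
        have WTc: "W - T \<in> carrier_mat (d (h a)) (d (t a))" using Tc by (rule minus_carrier_mat)
        have "((W - T) * Bm x (j, as)) $$ (r, k) = 0" using WB[of j as] g ga r k by simp
        then show "(\<Sum>s<d (t a). (W - T) $$ (r, s) * Bm x \<gamma> $$ (s,k)) = 0"
          using mentry[OF WTc Bc r, of k] k ga by simp
      qed
      from span[OF st ta this] s have "(W - T) $$ (r, s) = 0" by blast
      then show "W $$ (r, s) = T $$ (r, s)" using r s Tc by simp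
    qed
    then show "fst v a = xi (h a) * fst x a - fst x a * xi (t a)" unfolding W_def T_def X_def .
  qed
  show ?thesis unfolding in_orbit_tangent_def using xic E A by blast
qed

lemma part3:
  "(\<Sum>i\<in>Q0. LV x v i) = 0 \<longleftrightarrow> in_orbit_tangent Q0 Q1 h t d x v"
proof -
  have "(\<Sum>i\<in>Q0. LV x v i) = 0 \<longleftrightarrow> (\<forall>i\<in>Q0. LV x v i = 0)"
    using fin0 LV_nonneg[OF st v] by (intro sum_nonneg_eq_0_iff) auto
  then show ?thesis using tangent_imp_zero zero_imp_tangent by blast
qed

end
end


context quiv begin

lemma levi_sum:
  assumes st: "stable Q0 Q1 h t n d x" and v: "wf_point Q0 Q1 h t n d v"
  shows "levi (\<lambda>y. \<Sum>i\<in>Q0. logdet Q0 Q1 h t n d i y) x v = (\<Sum>i\<in>Q0. LV x v i)"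
proof -
  have "\<forall>i\<in>Q0. \<exists>w1 w2. D2 (\<lambda>s. logdet Q0 Q1 h t n d i (padd x (of_real s) v)) w1
      \<and> D2 (\<lambda>s. logdet Q0 Q1 h t n d i (padd x (\<i> * of_real s) v)) w2 \<and> w1 + w2 = 4 * LV x v i"
  proof
    fix i assume i: "i \<in> Q0"
    have C: "(1 / fact (d i) :: real) > 0" by simp
    show "\<exists>w1 w2. D2 (\<lambda>s. logdet Q0 Q1 h t n d i (padd x (of_real s) v)) w1
      \<and> D2 (\<lambda>s. logdet Q0 Q1 h t n d i (padd x (\<i> * of_real s) v)) w2 \<and> w1 + w2 = 4 * LV x v i"
      using vertex_D2[OF st v i C, of "\<lambda>z. logdet Q0 Q1 h t n d i (padd x z v)"] logdet_eq by auto
  qed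
  note ex1 = this
  obtain W1 where W1: "\<forall>i\<in>Q0. \<exists>w2. D2 (\<lambda>s. logdet Q0 Q1 h t n d i (padd x (of_real s) v)) (W1 i)
      \<and> D2 (\<lambda>s. logdet Q0 Q1 h t n d i (padd x (\<i> * of_real s) v)) w2 \<and> W1 i + w2 = 4 * LV x v i"
    using bchoice[OF ex1] by blast
  obtain W2 where W: "\<forall>i\<in>Q0. D2 (\<lambda>s. logdet Q0 Q1 h t n d i (padd x (of_real s) v)) (W1 i)
      \<and> D2 (\<lambda>s. logdet Q0 Q1 h t n d i (padd x (\<i> * of_real s) v)) (W2 i) \<and> W1 i + W2 i = 4 * LV x v i"
    using bchoice[OF W1] by blast
  have D1: "D2 (\<lambda>s. \<Sum>i\<in>Q0. logdet Q0 Q1 h t n d i (padd x (of_real s) v)) (\<Sum>i\<in>Q0. W1 i)"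
    by (rule D2_sum[OF fin0]) (use W in blast)
  have D2': "D2 (\<lambda>s. \<Sum>i\<in>Q0. logdet Q0 Q1 h t n d i (padd x (\<i> * of_real s) v)) (\<Sum>i\<in>Q0. W2 i)"
    by (rule D2_sum[OF fin0]) (use W in blast)
  have "levi (\<lambda>y. \<Sum>i\<in>Q0. logdet Q0 Q1 h t n d i y) x v = ((\<Sum>i\<in>Q0. W1 i) + (\<Sum>i\<in>Q0. W2 i)) / 4"
    unfolding levi_def using D2_deriv[OF D1] D2_deriv[OF D2'] by simp
  also have "\<dots> = (\<Sum>i\<in>Q0. (W1 i + W2 i) / 4)" unfolding sum_divide_distrib[symmetric] sum.distrib ..
  also have "\<dots> = (\<Sum>i\<in>Q0. LV x v i)" using W by (intro sum.cong) auto
  finally show ?thesis .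
qed

end

theorem theorem3:
  fixes Q0 :: "'v set" and Q1 :: "'e set" and h t :: "'e \<Rightarrow> 'v" and n d :: "'v \<Rightarrow> nat"
  assumes "finite Q0" and "finite Q1"
    and "\<forall>a\<in>Q1. h a \<in> Q0 \<and> t a \<in> Q0"
    and "no_oriented_cycle Q0 Q1 h t"
  shows
    "(\<forall>i\<in>Q0. \<forall>x v g k. stable Q0 Q1 h t n d x \<and> wf_point Q0 Q1 h t n d v \<and> is_GL Q0 d g k \<longrightarrow>
         levi (logdet Q0 Q1 h t n d i) (gl_act h t g k x) (gl_act h t g k v)
           = levi (logdet Q0 Q1 h t n d i) x v)
   \<and> (\<forall>i\<in>Q0. \<forall>x v. stable Q0 Q1 h t n d x \<and> wf_point Q0 Q1 h t n d v \<longrightarrow>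
         levi (logdet Q0 Q1 h t n d i) x v \<ge> 0)
   \<and> (\<forall>x v. stable Q0 Q1 h t n d x \<and> wf_point Q0 Q1 h t n d v \<longrightarrow>
         (levi (\<lambda>y. \<Sum>i\<in>Q0. logdet Q0 Q1 h t n d i y) x v = 0
            \<longleftrightarrow> in_orbit_tangent Q0 Q1 h t d x v))"
proof -
  interpret quiv Q0 Q1 h t n d using assms by unfold_locales
  have P1: "levi (logdet Q0 Q1 h t n d i) (gl_act h t g k x) (gl_act h t g k v) = levi (logdet Q0 Q1 h t n d i) x v"
    if "i \<in> Q0" "stable Q0 Q1 h t n d x" "wf_point Q0 Q1 h t n d v" "is_GL Q0 d g k" for i x v g k
    using levi_vertex_gl[OF that(2,3,1,4)] levi_vertex[OF that(2,3,1)] by simp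
  have P2: "levi (logdet Q0 Q1 h t n d i) x v \<ge> 0"
    if "i \<in> Q0" "stable Q0 Q1 h t n d x" "wf_point Q0 Q1 h t n d v" for i x v
    using levi_vertex[OF that(2,3,1)] LV_nonneg[OF that(2,3,1)] by simp
  have P3: "levi (\<lambda>y. \<Sum>i\<in>Q0. logdet Q0 Q1 h t n d i y) x v = 0 \<longleftrightarrow> in_orbit_tangent Q0 Q1 h t d x v"
    if "stable Q0 Q1 h t n d x" "wf_point Q0 Q1 h t n d v" for x v
    using levi_sum[OF that] part3[OF that] by simp
  show ?thesis
  proof (intro conjI)
    show "\<forall>i\<in>Q0. \<forall>x v g k. stable Q0 Q1 h t n d x \<and> wf_point Q0 Q1 h t n d v \<and> is_GL Q0 d g k \<longrightarrow>
         levi (logdet Q0 Q1 h t n d i) (gl_act h t g k x) (gl_act h t g k v)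
           = levi (logdet Q0 Q1 h t n d i) x v" using P1 by simp
    show "\<forall>i\<in>Q0. \<forall>x v. stable Q0 Q1 h t n d x \<and> wf_point Q0 Q1 h t n d v \<longrightarrow>
         levi (logdet Q0 Q1 h t n d i) x v \<ge> 0" using P2 by simp
    show "\<forall>x v. stable Q0 Q1 h t n d x \<and> wf_point Q0 Q1 h t n d v \<longrightarrow>
         (levi (\<lambda>y. \<Sum>i\<in>Q0. logdet Q0 Q1 h t n d i y) x v = 0
            \<longleftrightarrow> in_orbit_tangent Q0 Q1 h t d x v)" using P3 by simp
  qed
qed


end
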